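(* Let $M \geq 1$ and let $f \colon (\mathbb{W},d_{\mathrm{par}}) \to (\mathbb{H},d)$ be an $M$-bilipschitz map. For any $\epsilon \in (0,1]$ and $C \geq 1$ there exists a constant $C' = C'(C,\epsilon,M)$ such that $$\sum_{Q \in \mathcal{B}(C,\epsilon),\ Q \subset Q_{0}} \ell(Q)^{3} \leq C'\ell(Q_{0})^{3} \quad \text{for all } Q_{0} \in \mathcal{D},$$ where $\mathcal{B}(C,\epsilon) = \{Q \in \mathcal{D} : \rho_{f}(CQ) \geq \epsilon\}$.
   Context: $\mathbb{H}$ is $\mathbb{R}^{3}$ with group law $(x_{1},y_{1},t_{1}) \cdot (x_{2},y_{2},t_{2}) = (x_{1}+x_{2},y_{1}+y_{2},t_{1}+t_{2}+\tfrac{1}{2}(x_{1}y_{2}-x_{2}y_{1}))$, metric $d(p,q) = \|q^{-1}\cdot p\|$ with $\|(x,y,t)\| = \max\{\sqrt{x^{2}+y^{2}},\sqrt{|t|}\}$, and $N(E,\delta) = \{p : \operatorname{dist}(p,E) \leq \delta\}$. A horizontal line in $\mathbb{H}$ is a set $p \cdot \{(sa,sb,0) : s \in \mathbb{R}\}$ with $p \in \mathbb{H}$, $(a,b) \neq 0$. $\mathbb{W}$ is $\mathbb{R}^{2}$ with $d_{\mathrm{par}}((y,t),(\xi,\tau)) = \max\{|y-\xi|,|t-\tau|^{1/2}\}$; horizontal lines in $\mathbb{W}$ are the sets $\mathbb{R} \times \{t\}$; $B(w,r)$ is the closed $d_{\mathrm{par}}$-ball. The ruler coefficient $\rho_{f}(B(w,r))$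 is the infimum of $\rho > 0$ such that for every horizontal line $\ell \subset \mathbb{W}$ there is a horizontal line $L \subset \mathbb{H}$ with $f(\ell \cap B(w,r)) \subset N(L,\rho r)$. $\mathcal{D}$ is the family of dyadic parabolic rectangles $Q = [k2^{-n},(k+1)2^{-n}) \times [l4^{-n},(l+1)4^{-n})$, $\ell(Q) = 2^{-n}$, $c_{Q}$ its centre, and $CQ := B(c_{Q},C\ell(Q))$. *)

theory Defs
  imports "HOL-Analysis.Analysis"
begin

type_synonym heis = "real \<times> real \<times> real"

definition hmult :: "heis \<Rightarrow> heis \<Rightarrow> heis" where
  "hmult p q = (case p of (x1, y1, t1) \<Rightarrow> case q of (x2, y2, t2) \<Rightarrow>
     (x1 + x2, y1 + y2, t1 + t2 + (x1 * y2 - x2 * y1) / 2))"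

definition hinv :: "heis \<Rightarrow> heis" where
  "hinv p = (case p of (x, y, t) \<Rightarrow> (-x, -y, -t))"

definition hnorm :: "heis \<Rightarrow> real" where
  "hnorm p = (case p of (x, y, t) \<Rightarrow> max (sqrt (x^2 + y^2)) (sqrt \<bar>t\<bar>))"

definition hdist :: "heis \<Rightarrow> heis \<Rightarrow> real" where
  "hdist p q = hnorm (hmult (hinv q) p)"

definition hdist_set :: "heis \<Rightarrow> heis set \<Rightarrow> real" where
  "hdist_set p E = Inf (hdist p ` E)"

definition hnbhd :: "heis set \<Rightarrow> real \<Rightarrow> heis set" where
  "hnbhd E \<delta> = {p. hdist_set p E \<le> \<delta>}"

definition horizontal_line_H :: "heis set \<Rightarrow> bool" where
  "horizontal_line_H L \<longleftrightarrow> (\<exists>p a b. (a, b) \<noteq> (0, 0) \<and>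
      L = {hmult p (s * a, s * b, 0) | s. True})"

type_synonym wpt = "real \<times> real"

definition dpar :: "wpt \<Rightarrow> wpt \<Rightarrow> real" where
  "dpar w v = (case w of (y, t) \<Rightarrow> case v of (\<xi>, \<tau>) \<Rightarrow>
     max \<bar>y - \<xi>\<bar> (sqrt \<bar>t - \<tau>\<bar>))"

definition horizontal_line_W :: "wpt set \<Rightarrow> bool" where
  "horizontal_line_W hl \<longleftrightarrow> (\<exists>t. hl = UNIV \<times> {t})"

definition pball :: "wpt \<Rightarrow> real \<Rightarrow> wpt set" where
  "pball w r = {v. dpar w v \<le> r}"

definition ruler_coeff :: "(wpt \<Rightarrow> heis) \<Rightarrow> wpt \<Rightarrow> real \<Rightarrow> real" where
  "ruler_coeff f w r = Inf {\<rho>. \<rho> > 0 \<and> (\<forall>hl. horizontal_line_W hl \<longrightarrow>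
      (\<exists>L. horizontal_line_H L \<and> f ` (hl \<inter> pball w r) \<subseteq> hnbhd L (\<rho> * r)))}"

definition bilipschitz :: "real \<Rightarrow> (wpt \<Rightarrow> heis) \<Rightarrow> bool" where
  "bilipschitz M f \<longleftrightarrow> (\<forall>w v. dpar w v / M \<le> hdist (f w) (f v) \<and>
      hdist (f w) (f v) \<le> M * dpar w v)"

definition dyadic_rect :: "int \<Rightarrow> int \<Rightarrow> int \<Rightarrow> wpt set" where
  "dyadic_rect n k l = {(y, t). of_int k * 2 powi (-n) \<le> y \<and> y < of_int (k + 1) * 2 powi (-n)
      \<and> of_int l * 4 powi (-n) \<le> t \<and> t < of_int (l + 1) * 4 powi (-n)}"

definition dyadic :: "wpt set set" where
  "dyadic = {dyadic_rect n k l | n k l. True}"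

definition dyadic_index :: "wpt set \<Rightarrow> int \<times> int \<times> int" where
  "dyadic_index Q = (THE (n, k, l). Q = dyadic_rect n k l)"

definition side_len :: "wpt set \<Rightarrow> real" where
  "side_len Q = (case dyadic_index Q of (n, k, l) \<Rightarrow> 2 powi (-n))"

definition centre :: "wpt set \<Rightarrow> wpt" where
  "centre Q = (case dyadic_index Q of (n, k, l) \<Rightarrow>
     ((of_int k + 1/2) * 2 powi (-n), (of_int l + 1/2) * 4 powi (-n)))"

text \<open>CQ := B(c_Q, C l(Q)), represented by its centre and radius.\<close>

definition bad_set :: "(wpt \<Rightarrow> heis) \<Rightarrow> real \<Rightarrow> real \<Rightarrow> wpt set set" where
  "bad_set f C \<epsilon> = {Q \<in> dyadic. ruler_coeff f (centre Q) (C * side_len Q) \<ge> \<epsilon>}"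

end

theory Submission
  imports Defs
begin


definition px :: "heis \<Rightarrow> real" where "px p = fst p"
definition py :: "heis \<Rightarrow> real" where "py p = fst (snd p)"
definition pt :: "heis \<Rightarrow> real" where "pt p = snd (snd p)"
definition tc :: "heis \<Rightarrow> heis \<Rightarrow> real" where
  "tc p q = pt q - pt p - (px p * py q - px q * py p) / 2"

lemma hdist_coords:
  "hdist q p = max (sqrt ((px q - px p)^2 + (py q - py p)^2)) (sqrt \<bar>tc p q\<bar>)"
proof -
  obtain x0 y0 t0 where p: "p = (x0,y0,t0)" by (cases p) auto
  obtain x1 y1 t1 where q: "q = (x1,y1,t1)" by (cases q) auto
  have e: "hmult (hinv p) q = (x1 - x0, y1 - y0, t1 - t0 - (x0 * y1 - x1 * y0)/2)"
    unfolding p q hmult_def hinv_def by (simp add: field_simps)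
  show ?thesis unfolding hdist_def e unfolding p q hnorm_def tc_def px_def py_def pt_def
    by simp
qed

lemma hdist_nonneg: "0 \<le> hdist q p"
  by (simp add: hdist_coords le_max_iff_disj)

lemma hdist_proj: "sqrt ((px q - px p)^2 + (py q - py p)^2) \<le> hdist q p"
  by (simp add: hdist_coords)

lemma hdist_px: "\<bar>px q - px p\<bar> \<le> hdist q p"
  by (rule order_trans[OF _ hdist_proj]) (simp add: real_le_rsqrt)

lemma hdist_py: "\<bar>py q - py p\<bar> \<le> hdist q p"
  by (rule order_trans[OF _ hdist_proj]) (simp add: real_le_rsqrt)

lemma hdist_tc: "\<bar>tc p q\<bar> \<le> (hdist q p)^2"
proof -
  have "sqrt \<bar>tc p q\<bar> \<le> hdist q p" by (simp add: hdist_coords)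
  hence "(sqrt \<bar>tc p q\<bar>)^2 \<le> (hdist q p)^2"
    by (rule power_mono) simp
  thus ?thesis by simp
qed

lemma tc_self[simp]: "tc p p = 0"
  by (simp add: tc_def algebra_simps)

lemma tc_step: "tc p r = tc p q + tc q r +
   ((px q - px p) * (py r - py p) - (py q - py p) * (px r - px p)) / 2"
  unfolding tc_def by (simp add: field_simps)

lemma hdist_line_point:
  fixes q p0 :: heis and e1 e2 :: real
  assumes e: "e1^2 + e2^2 = 1"
  defines "X \<equiv> px q - px p0" and "Y \<equiv> py q - py p0"
  defines "s \<equiv> e1 * X + e2 * Y" and "b \<equiv> e1 * Y - e2 * X"
  shows "hdist q (hmult p0 (s * e1, s * e2, 0)) = max \<bar>b\<bar> (sqrt \<bar>tc p0 q - s * b / 2\<bar>)"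
proof -
  obtain x0 y0 t0 where p: "p0 = (x0,y0,t0)" by (cases p0) auto
  obtain x1 y1 t1 where q: "q = (x1,y1,t1)" by (cases q) auto
  have hm: "hmult p0 (s * e1, s * e2, 0) = (x0 + s*e1, y0 + s*e2, t0 + (x0 * (s*e2) - s*e1*y0)/2)"
    unfolding p hmult_def by simp
  have h1: "(x1 - (x0 + s*e1))^2 + (y1 - (y0 + s*e2))^2 = b^2"
  proof -
    have a1: "x1 - (x0 + s*e1) = - e2 * b"
    proof -
      have "x1 - (x0 + s*e1) = (e1^2+e2^2) * (x1 - x0) - s*e1" using e by simp
      also have "... = - e2 * b"
        unfolding s_def b_def X_def Y_def q p px_def py_def by (simp add: power2_eq_square algebra_simps)
      finally show ?thesis .
    qed
    have a2: "y1 - (y0 + s*e2) = e1 * b"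
    proof -
      have "y1 - (y0 + s*e2) = (e1^2+e2^2) * (y1 - y0) - s*e2" using e by simp
      also have "... = e1 * b"
        unfolding s_def b_def X_def Y_def q p px_def py_def by (simp add: power2_eq_square algebra_simps)
      finally show ?thesis .
    qed
    have "(- e2 * b)^2 + (e1 * b)^2 = (e1^2+e2^2) * b^2" by (simp add: power2_eq_square algebra_simps)
    thus ?thesis using a1 a2 e by simp
  qed
  have h2: "tc (x0 + s*e1, y0 + s*e2, t0 + (x0 * (s*e2) - s*e1*y0)/2) q = tc p0 q - s * b / 2"
    unfolding s_def b_def X_def Y_def q p px_def py_def pt_def tc_def
    by (simp add: field_simps)
  show ?thesis unfolding hdist_coords hm
    using h1 h2 by (simp add: px_def py_def q)
qed


lemma telescope_bound:
  fixes F :: "nat \<Rightarrow> real"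
  assumes "F 0 = 0" and "\<And>j. j < N \<Longrightarrow> \<bar>F (Suc j) - F j\<bar> \<le> K"
  shows "\<bar>F N\<bar> \<le> real N * K"
  using assms(2)
proof (induction N)
  case 0 then show ?case using assms(1) by simp
next
  case (Suc N)
  have "\<bar>F N\<bar> \<le> real N * K" using Suc by simp
  moreover have "\<bar>F (Suc N) - F N\<bar> \<le> K" using Suc by simp
  ultimately show ?case by (simp add: algebra_simps)
qed

lemma le_by_vanishing:
  fixes c d k :: real
  assumes "\<And>N::nat. N \<ge> 1 \<Longrightarrow> c \<le> d + k / real N"
  shows "c \<le> d"
proof (rule ccontr)
  assume "\<not> c \<le> d"
  hence pos: "c - d > 0" by simp
  obtain N :: nat where N: "real N > \<bar>k\<bar> / (c - d)" using reals_Archimedean2 by blast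
  have N1: "N \<ge> 1"
  proof (rule ccontr)
    assume "\<not> N \<ge> 1" hence "N = 0" by simp
    have "\<bar>k\<bar> / (c - d) \<ge> 0" using pos by simp
    with N \<open>N = 0\<close> show False by simp
  qed
  hence Npos: "real N > 0" by simp
  have "\<bar>k\<bar> < real N * (c - d)" using N pos by (simp add: pos_divide_less_eq mult.commute)
  hence "k / real N < c - d" using Npos by (simp add: divide_less_eq mult.commute)
  moreover have "c \<le> d + k / real N" using assms N1 by blast
  ultimately show False by simp
qed

lemma cs_bound:
  fixes e1 e2 u v :: real
  assumes "e1^2 + e2^2 = 1"
  shows "\<bar>e1 * u + e2 * v\<bar> \<le> sqrt (u^2 + v^2)"
proof -
  have "(e1 * u + e2 * v)^2 \<le> (e1^2 + e2^2) * (u^2 + v^2)"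
  proof -
    have "0 \<le> (e1 * v - e2 * u)^2" by simp
    thus ?thesis by (simp add: power2_eq_square algebra_simps)
  qed
  hence "(e1 * u + e2 * v)^2 \<le> u^2 + v^2" using assms by simp
  thus ?thesis by (simp add: real_le_rsqrt)
qed

lemma area_lemma:
  fixes \<gamma> :: "real \<Rightarrow> heis" and M a x e1 e2 \<eta> :: real
  assumes lip: "\<And>u v. hdist (\<gamma> u) (\<gamma> v) \<le> M * \<bar>u - v\<bar>" and M: "M \<ge> 0"
    and ax: "a \<le> x" and e: "e1^2 + e2^2 = 1" and eta: "\<eta> \<ge> 0"
    and dev: "\<And>y. a \<le> y \<Longrightarrow> y \<le> x \<Longrightarrow>
        \<bar>e1 * (py (\<gamma> y) - py (\<gamma> a)) - e2 * (px (\<gamma> y) - px (\<gamma> a))\<bar> \<le> \<eta>"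
  defines "s \<equiv> e1 * (px (\<gamma> x) - px (\<gamma> a)) + e2 * (py (\<gamma> x) - py (\<gamma> a))"
  shows "hdist (\<gamma> x) (hmult (\<gamma> a) (s * e1, s * e2, 0)) \<le> max \<eta> (sqrt (\<eta> * M * (x - a)))"
proof -
  define X where "X u = px (\<gamma> u) - px (\<gamma> a)" for u
  define Y where "Y u = py (\<gamma> u) - py (\<gamma> a)" for u
  define S where "S u = e1 * X u + e2 * Y u" for u
  define B where "B u = e1 * Y u - e2 * X u" for u
  define \<Phi> where "\<Phi> u = tc (\<gamma> a) (\<gamma> u) - S u * B u / 2" for u
  have main: "\<bar>\<Phi> x\<bar> \<le> \<eta> * M * (x - a) + (M^2 * (x - a)^2) / real N" if N1: "N \<ge> 1" for N :: nat
  proof -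
    define h where "h = (x - a) / real N"
    have h0: "h \<ge> 0" using ax N1 by (simp add: h_def)
    define yy where "yy j = a + real j * h" for j :: nat
    have yyN: "yy N = x" using N1 by (simp add: yy_def h_def)
    have yyin: "a \<le> yy j \<and> yy j \<le> x" if "j \<le> N" for j
    proof -
      have "real j * h \<le> real N * h" using that h0 by (simp add: mult_right_mono)
      also have "real N * h = x - a" using N1 by (simp add: h_def)
      finally show ?thesis using h0 by (simp add: yy_def)
    qed
    have step: "\<bar>\<Phi> (yy (Suc j)) - \<Phi> (yy j)\<bar> \<le> (M * h)^2 + \<eta> * (M * h)" if j: "j < N" for j
    proof -
      let ?p = "\<gamma> (yy j)" and ?q = "\<gamma> (yy (Suc j))"
      have dyy: "\<bar>yy (Suc j) - yy j\<bar> = h" using h0 by (simp add: yy_def algebra_simps)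
      have dq: "hdist ?q ?p \<le> M * h" using lip[of "yy (Suc j)" "yy j"] dyy by simp
      have sig: "\<bar>tc ?p ?q\<bar> \<le> (M * h)^2"
      proof -
        have "(hdist ?q ?p)^2 \<le> (M * h)^2" by (rule power_mono[OF dq hdist_nonneg])
        thus ?thesis using hdist_tc[of ?p ?q] by linarith
      qed
      have dS: "\<bar>S (yy (Suc j)) - S (yy j)\<bar> \<le> M * h"
      proof -
        have "S (yy (Suc j)) - S (yy j) = e1 * (px ?q - px ?p) + e2 * (py ?q - py ?p)"
          by (simp add: S_def X_def Y_def algebra_simps)
        hence "\<bar>S (yy (Suc j)) - S (yy j)\<bar> \<le> sqrt ((px ?q - px ?p)^2 + (py ?q - py ?p)^2)"
          using cs_bound[OF e] by simp
        also have "\<dots> \<le> hdist ?q ?p" by (rule hdist_proj)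
        finally show ?thesis using dq by simp
      qed
      have B1: "\<bar>B (yy j)\<bar> \<le> \<eta>" using dev yyin[of j] j by (simp add: B_def X_def Y_def)
      have B2: "\<bar>B (yy (Suc j))\<bar> \<le> \<eta>" using dev yyin[of "Suc j"] j by (simp add: B_def X_def Y_def)
      have tcs: "tc (\<gamma> a) ?q = tc (\<gamma> a) ?p + tc ?p ?q + (X (yy j) * Y (yy (Suc j)) - Y (yy j) * X (yy (Suc j))) / 2"
        using tc_step[of "\<gamma> a" ?q ?p] by (simp add: X_def Y_def)
      have om: "X (yy j) * Y (yy (Suc j)) - Y (yy j) * X (yy (Suc j)) =
          S (yy j) * B (yy (Suc j)) - B (yy j) * S (yy (Suc j))"
      proof -
        have "S (yy j) * B (yy (Suc j)) - B (yy j) * S (yy (Suc j)) =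
          (e1^2 + e2^2) * (X (yy j) * Y (yy (Suc j)) - Y (yy j) * X (yy (Suc j)))"
          by (simp add: S_def B_def power2_eq_square algebra_simps)
        thus ?thesis using e by simp
      qed
      have eq: "\<Phi> (yy (Suc j)) - \<Phi> (yy j) = tc ?p ?q -
          (B (yy (Suc j)) + B (yy j)) * (S (yy (Suc j)) - S (yy j)) / 2"
        unfolding \<Phi>_def tcs om by (simp add: field_simps)
      have "\<bar>(B (yy (Suc j)) + B (yy j)) * (S (yy (Suc j)) - S (yy j)) / 2\<bar> \<le> \<eta> * (M * h)"
      proof -
        have "\<bar>B (yy (Suc j)) + B (yy j)\<bar> \<le> 2 * \<eta>" using B1 B2 by linarith
        hence "\<bar>(B (yy (Suc j)) + B (yy j)) * (S (yy (Suc j)) - S (yy j))\<bar> \<le> (2 * \<eta>) * (M * h)"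
          unfolding abs_mult using dS by (intro mult_mono) auto
        thus ?thesis by simp
      qed
      thus ?thesis unfolding eq using sig by linarith
    qed
    have z: "\<Phi> (yy 0) = 0" by (simp add: \<Phi>_def S_def B_def X_def Y_def yy_def)
    have "\<bar>\<Phi> (yy N)\<bar> \<le> real N * ((M * h)^2 + \<eta> * (M * h))"
      using telescope_bound[of "\<lambda>j. \<Phi> (yy j)" N, OF z step] by blast
    also have "real N * ((M * h)^2 + \<eta> * (M * h)) = \<eta> * M * (x - a) + (M^2 * (x - a)^2) / real N"
      using N1 by (simp add: h_def power2_eq_square field_simps)
    finally show ?thesis using yyN by simp
  qed
  have Phi: "\<bar>\<Phi> x\<bar> \<le> \<eta> * M * (x - a)"
    by (rule le_by_vanishing[where k = "M^2 * (x - a)^2"]) (use main in auto)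
  have Bx: "\<bar>B x\<bar> \<le> \<eta>" using dev[of x] ax by (simp add: B_def X_def Y_def)
  have "hdist (\<gamma> x) (hmult (\<gamma> a) (s * e1, s * e2, 0)) = max \<bar>B x\<bar> (sqrt \<bar>\<Phi> x\<bar>)"
    using hdist_line_point[OF e, of "\<gamma> x" "\<gamma> a"]
    by (simp add: \<Phi>_def S_def B_def X_def Y_def s_def)
  also have "\<dots> \<le> max \<eta> (sqrt (\<eta> * M * (x - a)))"
    using Bx Phi by (meson max.mono real_sqrt_le_iff)
  finally show ?thesis .
qed


definition dlt :: "(real \<Rightarrow> complex) \<Rightarrow> real \<Rightarrow> real \<Rightarrow> real" where
  "dlt g x h = cmod (g x + g (x + h) - 2 * g (x + h / 2)) / h"

definition lin :: "(real \<Rightarrow> complex) \<Rightarrow> real \<Rightarrow> real \<Rightarrow> real \<Rightarrow> complex" where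
  "lin g a R y = g a + of_real ((y - a) / R) * (g (a + R) - g a)"

lemma aux1: "(ga::complex) + of_real (2 * t) * (gm - ga) - (ga + of_real t * (gb - ga)) = of_real t * (2 * gm - ga - gb)"
  by (simp add: algebra_simps)
lemma aux2: "(gm::complex) + of_real (2 * t) * (gb - gm) - (ga + of_real (t + 1/2) * (gb - ga)) = of_real (1/2 - t) * (2 * gm - ga - gb)"
  by (simp add: field_simps)

lemma lin_left_eq:
  shows "lin g a (R/2) y - lin g a R y = of_real ((y - a) / R) * (2 * g (a + R/2) - g a - g (a + R))"
proof -
  define t where "t = (y - a) / R"
  have e: "(y - a) / (R/2) = 2 * t" by (simp add: t_def)
  show ?thesis unfolding lin_def e t_def[symmetric] by (rule aux1)
qed

lemma lin_right_eq:
  assumes R: "R > 0"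
  shows "lin g (a + R/2) (R/2) y - lin g a R y = of_real (1/2 - (y - (a + R/2)) / R) * (2 * g (a + R/2) - g a - g (a + R))"
proof -
  define t where "t = (y - (a + R/2)) / R"
  have e1: "(y - (a + R/2)) / (R/2) = 2 * t" by (simp add: t_def)
  have e2: "(y - a) / R = t + 1/2" using R by (simp add: field_simps t_def)
  have e3: "a + R / 2 + R / 2 = a + R" by simp
  show ?thesis unfolding lin_def e1 e2 e3 t_def[symmetric] by (rule aux2)
qed

lemma dlt_R: "R > 0 \<Longrightarrow> cmod (2 * g (a + R/2) - g a - g (a + R)) = dlt g a R * R"
proof -
  assume R: "R > 0"
  have "2 * g (a + R/2) - g a - g (a + R) = - (g a + g (a + R) - 2 * g (a + R/2))" by simp
  hence "cmod (2 * g (a + R/2) - g a - g (a + R)) = cmod (g a + g (a + R) - 2 * g (a + R/2))"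
    by (metis norm_minus_cancel)
  thus ?thesis using R by (simp add: dlt_def)
qed

lemma lin_half_left:
  assumes R: "R > 0" and y: "a \<le> y" "y \<le> a + R/2"
  shows "cmod (lin g a (R/2) y - lin g a R y) \<le> dlt g a R * R / 2"
proof -
  define t where "t = (y - a) / R"
  have t: "0 \<le> t" "t \<le> 1/2" using R y by (auto simp: t_def field_simps)
  have "cmod (lin g a (R/2) y - lin g a R y) = t * (dlt g a R * R)"
    unfolding lin_left_eq t_def[symmetric] norm_mult dlt_R[OF R] using t by simp
  also have "\<dots> \<le> (1/2) * (dlt g a R * R)"
    using t R by (intro mult_right_mono) (auto simp: dlt_def)
  finally show ?thesis by simp
qed

lemma lin_half_right:
  assumes R: "R > 0" and y: "a + R/2 \<le> y" "y \<le> a + R"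
  shows "cmod (lin g (a + R/2) (R/2) y - lin g a R y) \<le> dlt g a R * R / 2"
proof -
  define t where "t = 1/2 - (y - (a + R/2)) / R"
  have t: "0 \<le> t" "t \<le> 1/2" using R y by (auto simp: t_def field_simps)
  have "cmod (lin g (a + R/2) (R/2) y - lin g a R y) = t * (dlt g a R * R)"
    unfolding lin_right_eq[OF R] t_def[symmetric] norm_mult dlt_R[OF R] using t by simp
  also have "\<dots> \<le> (1/2) * (dlt g a R * R)"
    using t R by (intro mult_right_mono) (auto simp: dlt_def)
  finally show ?thesis by simp
qed

lemma sup_dev:
  fixes g :: "real \<Rightarrow> complex"
  assumes lip: "\<And>u v. cmod (g u - g v) \<le> M * \<bar>u - v\<bar>" and M: "M \<ge> 0" and th: "\<theta> \<ge> 0"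
  shows "R > 0 \<Longrightarrow> (\<And>d i. d < N \<Longrightarrow> i < 2^d \<Longrightarrow> dlt g (a + real i * R / 2^d) (R / 2^d) \<le> \<theta>)
    \<Longrightarrow> a \<le> y \<Longrightarrow> y \<le> a + R \<Longrightarrow> cmod (g y - lin g a R y) \<le> \<theta> * R + 2 * M * R / 2^N"
proof (induction N arbitrary: a R)
  case 0
  define t where "t = (y - a) / R"
  have t: "0 \<le> t" "t \<le> 1" using 0 by (auto simp: t_def field_simps)
  have "cmod (g y - lin g a R y) = cmod ((g y - g a) - of_real t * (g (a + R) - g a))"
    by (simp add: lin_def t_def[symmetric] algebra_simps)
  also have "\<dots> \<le> cmod (g y - g a) + cmod (of_real t * (g (a + R) - g a))"
    by (rule norm_triangle_ineq4)
  also have "cmod (g y - g a) \<le> M * R"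
  proof -
    have "cmod (g y - g a) \<le> M * \<bar>y - a\<bar>" by (rule lip)
    also have "\<dots> \<le> M * R" using 0 M by (intro mult_left_mono) auto
    finally show ?thesis .
  qed
  also have "cmod (of_real t * (g (a + R) - g a)) \<le> 1 * (M * R)"
  proof -
    have "cmod (of_real t * (g (a + R) - g a)) = t * cmod (g (a + R) - g a)"
      using t by (simp add: norm_mult)
    also have "\<dots> \<le> 1 * (M * R)"
    proof (rule mult_mono)
      show "cmod (g (a + R) - g a) \<le> M * R" using lip[of "a + R" a] 0 by simp
    qed (use M 0 t in auto)
    finally show ?thesis .
  qed
  moreover have "0 \<le> \<theta> * R" using th 0 by simp
  ultimately show ?case by simp
next
  case (Suc N)
  have R2: "R / 2 > 0" using Suc by simp
  have dK: "dlt g a R \<le> \<theta>" using Suc.prems(2)[of 0 0] by simp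
  have left: "dlt g (a + real i * (R/2) / 2^d) ((R/2) / 2^d) \<le> \<theta>" if "d < N" "i < 2^d" for d i
  proof -
    have "dlt g (a + real i * R / 2^Suc d) (R / 2^Suc d) \<le> \<theta>"
      using Suc.prems(2)[of "Suc d" i] that by simp
    moreover have "real i * R / 2^Suc d = real i * (R/2) / 2^d" by simp
    moreover have "R / 2^Suc d = (R/2) / 2^d" by simp
    ultimately show ?thesis by simp
  qed
  have right: "dlt g ((a + R/2) + real i * (R/2) / 2^d) ((R/2) / 2^d) \<le> \<theta>" if "d < N" "i < 2^d" for d i
  proof -
    have "dlt g (a + real (2^d + i) * R / 2^Suc d) (R / 2^Suc d) \<le> \<theta>"
      using Suc.prems(2)[of "Suc d" "2^d + i"] that by simp
    moreover have "a + real (2^d + i) * R / 2^Suc d = (a + R/2) + real i * (R/2) / 2^d"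
    proof -
      have "real (2^d + i) * R / 2^Suc d = (2^d * R + real i * R) / (2 * 2^d)"
        by (simp add: algebra_simps)
      also have "\<dots> = R/2 + real i * (R/2) / 2^d" by (simp add: field_simps)
      finally show ?thesis by simp
    qed
    moreover have "R / 2^Suc d = (R/2) / 2^d" by simp
    ultimately show ?thesis by (simp add: add.assoc)
  qed
  have eq: "\<theta> * (R/2) + 2 * M * (R/2) / 2^N + \<theta> * R / 2 = \<theta> * R + 2 * M * R / 2 ^ Suc N"
    by (simp add: field_simps)
  have dK2: "dlt g a R * R / 2 \<le> \<theta> * R / 2" using dK Suc.prems(1) by (simp add: mult_right_mono)
  show ?case
  proof (cases "y \<le> a + R/2")
    case True
    have "cmod (g y - lin g a R y) \<le> cmod (g y - lin g a (R/2) y) + cmod (lin g a (R/2) y - lin g a R y)"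
      using norm_triangle_ineq[of "g y - lin g a (R/2) y" "lin g a (R/2) y - lin g a R y"] by simp
    also have "cmod (g y - lin g a (R/2) y) \<le> \<theta> * (R/2) + 2 * M * (R/2) / 2^N"
      using Suc.IH[OF R2 left] Suc.prems True by simp
    also have "cmod (lin g a (R/2) y - lin g a R y) \<le> dlt g a R * R / 2"
      using lin_half_left[of R a y g] Suc.prems True by simp
    finally show ?thesis using eq dK2 by simp
  next
    case False
    have "cmod (g y - lin g a R y) \<le> cmod (g y - lin g (a + R/2) (R/2) y) + cmod (lin g (a + R/2) (R/2) y - lin g a R y)"
      using norm_triangle_ineq[of "g y - lin g (a + R/2) (R/2) y" "lin g (a + R/2) (R/2) y - lin g a R y"] by simp
    also have "cmod (g y - lin g (a + R/2) (R/2) y) \<le> \<theta> * (R/2) + 2 * M * (R/2) / 2^N"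
      using Suc.IH[OF R2 right] Suc.prems False by simp
    also have "cmod (lin g (a + R/2) (R/2) y - lin g a R y) \<le> dlt g a R * R / 2"
      using lin_half_right[of R a y g] Suc.prems False by simp
    finally show ?thesis using eq dK2 by simp
  qed
qed


lemma sum_even_odd: "(\<Sum>i<2*n. f i) = (\<Sum>i<n. f (2*i) + f (2*i+1))"
  for f :: "nat \<Rightarrow> real"
  by (induction n) (simp_all add: add.assoc)

lemma parallelogram_c: "2 * ((cmod u)^2 + (cmod v)^2) = (cmod (u + v))^2 + (cmod (u - v))^2"
  unfolding cmod_power2 by (simp add: power2_eq_square algebra_simps)

lemma pyth_step:
  fixes g :: "real \<Rightarrow> complex"
  assumes h: "h > 0"
  shows "(cmod (g (x + h/2) - g x))^2 / (h/2) + (cmod (g (x + h) - g (x + h/2)))^2 / (h/2)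
    = (cmod (g (x + h) - g x))^2 / h + (dlt g x h)^2 * h"
proof -
  let ?u = "g (x + h/2) - g x" and ?v = "g (x + h) - g (x + h/2)"
  have "(cmod ?u)^2 / (h/2) + (cmod ?v)^2 / (h/2) = 2 * ((cmod ?u)^2 + (cmod ?v)^2) / h"
    using h by (simp add: field_simps)
  also have "\<dots> = ((cmod (?u + ?v))^2 + (cmod (?u - ?v))^2) / h" by (simp only: parallelogram_c)
  also have "?u + ?v = g (x + h) - g x" by simp
  also have "cmod (?u - ?v) = dlt g x h * h"
  proof -
    have "?u - ?v = - (g x + g (x + h) - 2 * g (x + h/2))" by simp
    hence "cmod (?u - ?v) = cmod (g x + g (x + h) - 2 * g (x + h/2))" by (metis norm_minus_cancel)
    thus ?thesis using h by (simp add: dlt_def)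
  qed
  finally show ?thesis using h by (simp add: power2_eq_square field_simps)
qed

definition Een :: "(real \<Rightarrow> complex) \<Rightarrow> real \<Rightarrow> real \<Rightarrow> nat \<Rightarrow> real" where
  "Een g a H d = (\<Sum>i<2^d. (cmod (g (a + real (Suc i) * H / 2^d) - g (a + real i * H / 2^d)))^2 / (H / 2^d))"

definition tm :: "(real \<Rightarrow> complex) \<Rightarrow> real \<Rightarrow> real \<Rightarrow> nat \<Rightarrow> nat \<Rightarrow> real" where
  "tm g a H d i = (cmod (g (a + real (Suc i) * H / 2^d) - g (a + real i * H / 2^d)))^2 / (H / 2^d)"

lemma Een_tm: "Een g a H d = (\<Sum>i<2^d. tm g a H d i)"
  unfolding Een_def tm_def by simp

lemma tm_pair:
  fixes g :: "real \<Rightarrow> complex"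
  assumes H: "H > 0"
  shows "tm g a H (Suc d) (2*i) + tm g a H (Suc d) (2*i+1) =
     tm g a H d i + (dlt g (a + real i * H / 2^d) (H / 2^d))^2 * (H / 2^d)"
proof -
  define x where "x = a + real i * H / 2^d"
  define h where "h = H / 2^d"
  have h: "h > 0" using H by (simp add: h_def)
  have e1: "a + real (Suc (2*i)) * H / 2^Suc d = x + h/2"
    by (simp add: x_def h_def field_simps)
  have e2: "a + real (2*i) * H / 2^Suc d = x"
    by (simp add: x_def h_def field_simps)
  have e3: "H / 2^Suc d = h/2" by (simp add: h_def)
  have e4: "a + real (Suc (2*i+1)) * H / 2^Suc d = x + h"
    by (simp add: x_def h_def field_simps)
  have e5: "a + real (2*i+1) * H / 2^Suc d = x + h/2"
    by (simp add: x_def h_def field_simps)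
  have e6: "a + real (Suc i) * H / 2^d = x + h"
    by (simp add: x_def h_def field_simps)
  show ?thesis
    unfolding tm_def e1 e2 e3 e4 e5 e6 x_def[symmetric] h_def[symmetric]
    by (rule pyth_step[OF h])
qed

lemma Een_step:
  fixes g :: "real \<Rightarrow> complex"
  assumes H: "H > 0"
  shows "Een g a H (Suc d) = Een g a H d + (\<Sum>i<2^d. (dlt g (a + real i * H / 2^d) (H / 2^d))^2 * (H / 2^d))"
  unfolding Een_tm power_Suc[of 2 d] sum_even_odd tm_pair[OF H] sum.distrib ..

lemma Een_bound:
  fixes g :: "real \<Rightarrow> complex"
  assumes lip: "\<And>u v. cmod (g u - g v) \<le> M * \<bar>u - v\<bar>" and H: "H > 0"
  shows "Een g a H d \<le> M^2 * H"
proof -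
  let ?h = "H / 2^d"
  have h: "?h > 0" using H by simp
  have t: "(cmod (g (a + real (Suc i) * H / 2^d) - g (a + real i * H / 2^d)))^2 / ?h \<le> M^2 * ?h" for i
  proof -
    have d: "\<bar>(a + real (Suc i) * H / 2^d) - (a + real i * H / 2^d)\<bar> = ?h"
      using h by (simp add: field_simps)
    have "cmod (g (a + real (Suc i) * H / 2^d) - g (a + real i * H / 2^d)) \<le> M * ?h"
      using lip[of "a + real (Suc i) * H / 2^d" "a + real i * H / 2^d"] d by simp
    hence "(cmod (g (a + real (Suc i) * H / 2^d) - g (a + real i * H / 2^d)))^2 \<le> (M * ?h)^2"
      by (rule power_mono) simp
    hence "(cmod (g (a + real (Suc i) * H / 2^d) - g (a + real i * H / 2^d)))^2 / ?h \<le> (M * ?h)^2 / ?h"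
      using h by (intro divide_right_mono) auto
    also have "(M * ?h)^2 / ?h = M^2 * ?h" using h by (simp add: power2_eq_square)
    finally show ?thesis .
  qed
  have "Een g a H d \<le> (\<Sum>i<(2::nat)^d. M^2 * ?h)" unfolding Een_def by (rule sum_mono) (rule t)
  also have "\<dots> = M^2 * H" by simp
  finally show ?thesis .
qed

lemma pythagoras:
  fixes g :: "real \<Rightarrow> complex"
  assumes lip: "\<And>u v. cmod (g u - g v) \<le> M * \<bar>u - v\<bar>" and H: "H > 0"
  shows "(\<Sum>d<D. \<Sum>i<2^d. (dlt g (a + real i * H / 2^d) (H / 2^d))^2 * (H / 2^d)) \<le> M^2 * H"
proof -
  have eq: "(\<Sum>d<D. \<Sum>i<2^d. (dlt g (a + real i * H / 2^d) (H / 2^d))^2 * (H / 2^d)) = Een g a H D - Een g a H 0"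
    by (induction D) (simp_all add: Een_step[OF H])
  have "Een g a H 0 \<ge> 0" unfolding Een_def by (intro sum_nonneg divide_nonneg_nonneg) (auto simp: H less_imp_le)
  thus ?thesis unfolding eq using Een_bound[OF lip H, of a D] by linarith
qed


definition wd :: "int \<Rightarrow> real" where "wd n = 2 powi (-n)"

lemma wd_pos: "wd n > 0" by (simp add: wd_def)

lemma four_wd: "(4::real) powi (-n) = (wd n)^2"
proof -
  have "(4::real) powi (-n) = (2^2) powi (-n)" by simp
  also have "\<dots> = 2 powi (int 2 * (-n))" by (rule power_int_power)
  also have "\<dots> = 2 powi ((-n) * int 2)" by (simp add: mult.commute)
  also have "\<dots> = (2 powi (-n)) powi (int 2)" by (rule power_int_mult)
  also have "\<dots> = (wd n)^2" by (simp only: power_int_of_nat wd_def)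
  finally show ?thesis .
qed

lemma rect_eq: "dyadic_rect n k l = {of_int k * wd n ..< of_int (k+1) * wd n} \<times> {of_int l * (wd n)^2 ..< of_int (l+1) * (wd n)^2}"
  unfolding dyadic_rect_def four_wd wd_def[symmetric] by auto

lemma wd_strict: "n < n' \<Longrightarrow> wd n' < wd n"
  unfolding wd_def by (rule power_int_strict_increasing) auto

lemma wd_inj: "wd n = wd n' \<Longrightarrow> n = n'"
  using wd_strict[of n n'] wd_strict[of n' n] by (cases "n < n'"; cases "n' < n") auto

lemma wd_le_imp: "wd n \<le> wd n0 \<Longrightarrow> n0 \<le> n"
  using wd_strict[of n n0] by (cases "n < n0") auto

lemma wd_split: "n0 \<le> n \<Longrightarrow> wd n = wd n0 / 2 ^ (nat (n - n0))"
proof -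
  assume h: "n0 \<le> n"
  have "wd n0 = 2 powi (-n + (n - n0))" by (simp add: wd_def)
  also have "\<dots> = 2 powi (-n) * 2 powi (n - n0)" by (rule power_int_add) simp
  also have "2 powi (n - n0) = (2::real) ^ (nat (n - n0))"
    using h by (metis int_nat_eq power_int_of_nat diff_ge_0_iff_ge)
  finally show ?thesis by (simp add: wd_def)
qed

lemma rect_inj:
  assumes "dyadic_rect n k l = dyadic_rect n' k' l'"
  shows "n = n' \<and> k = k' \<and> l = l'"
proof -
  have w: "wd n > 0" "wd n' > 0" by (simp_all add: wd_pos)
  have ne1: "of_int k * wd n < of_int (k+1) * wd n" using w by (simp add: algebra_simps)
  have ne2: "of_int l * (wd n)^2 < of_int (l+1) * (wd n)^2" using w by (simp add: algebra_simps)
  have ne3: "of_int k' * wd n' < of_int (k'+1) * wd n'" using w by (simp add: algebra_simps)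
  have ne4: "of_int l' * (wd n')^2 < of_int (l'+1) * (wd n')^2" using w by (simp add: algebra_simps)
  from assms have eqs: "{of_int k * wd n ..< of_int (k+1) * wd n} = {of_int k' * wd n' ..< of_int (k'+1) * wd n'}"
     "{of_int l * (wd n)^2 ..< of_int (l+1) * (wd n)^2} = {of_int l' * (wd n')^2 ..< of_int (l'+1) * (wd n')^2}"
    unfolding rect_eq times_eq_iff using ne1 ne2 ne3 ne4 by auto
  have a: "of_int k * wd n = of_int k' * wd n'" "of_int (k+1) * wd n = of_int (k'+1) * wd n'"
    using atLeastLessThan_inj[OF eqs(1) ne1 ne3] by auto
  have b: "of_int l * (wd n)^2 = of_int l' * (wd n')^2"
    using atLeastLessThan_inj[OF eqs(2) ne2 ne4] by auto
  have "wd n = wd n'" using a by (simp add: algebra_simps)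
  hence nn: "n = n'" by (rule wd_inj)
  have "k = k'" using a(1) w unfolding nn by simp
  moreover have "l = l'" using b w unfolding nn by simp
  ultimately show ?thesis using nn by simp
qed

lemma index_rect[simp]: "dyadic_index (dyadic_rect n k l) = (n, k, l)"
  unfolding dyadic_index_def
  by (rule the_equality) (auto dest: rect_inj)

lemma side_len_rect[simp]: "side_len (dyadic_rect n k l) = wd n"
  by (simp add: side_len_def wd_def)

lemma centre_rect[simp]: "centre (dyadic_rect n k l) = ((of_int k + 1/2) * wd n, (of_int l + 1/2) * (wd n)^2)"
  by (simp add: centre_def wd_def[symmetric] four_wd)

lemma dyadicE:
  assumes "Q \<in> dyadic"
  obtains n k l where "Q = dyadic_rect n k l"
  using assms unfolding dyadic_def by auto

lemma sub_rect:
  assumes "dyadic_rect n k l \<subseteq> dyadic_rect n0 k0 l0"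
  shows "n0 \<le> n"
    and "of_int k0 * wd n0 \<le> (of_int k + 1/2) * wd n" "(of_int k + 1/2) * wd n \<le> of_int (k0 + 1) * wd n0"
    and "of_int l0 * (wd n0)^2 \<le> (of_int l + 1/2) * (wd n)^2" "(of_int l + 1/2) * (wd n)^2 \<le> of_int (l0 + 1) * (wd n0)^2"
proof -
  have w: "wd n > 0" "wd n0 > 0" by (simp_all add: wd_pos)
  have inQ: "(y, of_int l * (wd n)^2) \<in> dyadic_rect n0 k0 l0" if "of_int k * wd n \<le> y" "y < of_int (k+1) * wd n" for y
  proof -
    have "(y, of_int l * (wd n)^2) \<in> dyadic_rect n k l"
      unfolding rect_eq using that w by (simp add: algebra_simps)
    thus ?thesis using assms by blast
  qed
  have c: "((of_int k + 1/2) * wd n, (of_int l + 1/2) * (wd n)^2) \<in> dyadic_rect n0 k0 l0"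
  proof -
    have "((of_int k + 1/2) * wd n, (of_int l + 1/2) * (wd n)^2) \<in> dyadic_rect n k l"
      unfolding rect_eq using w by (simp add: algebra_simps)
    thus ?thesis using assms by blast
  qed
  thus "of_int k0 * wd n0 \<le> (of_int k + 1/2) * wd n" "(of_int k + 1/2) * wd n \<le> of_int (k0 + 1) * wd n0"
     "of_int l0 * (wd n0)^2 \<le> (of_int l + 1/2) * (wd n)^2" "(of_int l + 1/2) * (wd n)^2 \<le> of_int (l0 + 1) * (wd n0)^2"
    unfolding rect_eq by auto
  have "wd n \<le> wd n0"
  proof (rule ccontr)
    assume "\<not> wd n \<le> wd n0"
    hence lt: "wd n0 < wd n" by simp
    have k1: "of_int k0 * wd n0 \<le> of_int k * wd n"
      using inQ[of "of_int k * wd n"] w unfolding rect_eq by (auto simp: algebra_simps)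
    have "of_int k * wd n + wd n0 < of_int (k+1) * wd n" using lt by (simp add: algebra_simps)
    hence "of_int k * wd n + wd n0 < of_int (k0 + 1) * wd n0"
      using inQ[of "of_int k * wd n + wd n0"] w unfolding rect_eq by (auto simp: algebra_simps)
    thus False using k1 by (simp add: algebra_simps)
  qed
  thus "n0 \<le> n" by (rule wd_le_imp)
qed


definition gf :: "(wpt \<Rightarrow> heis) \<Rightarrow> real \<Rightarrow> real \<Rightarrow> real \<Rightarrow> complex" where
  "gf f sh t y = Complex (px (f (y + sh, t))) (py (f (y + sh, t)))"

lemma dpar_line: "dpar (u, t) (v, t) = \<bar>u - v\<bar>"
  by (simp add: dpar_def)

lemma dpar_vert: "dpar (y, t) (y, t') = sqrt \<bar>t - t'\<bar>"
  by (simp add: dpar_def)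

lemma bilip_up: "bilipschitz M f \<Longrightarrow> hdist (f w) (f v) \<le> M * dpar w v"
  unfolding bilipschitz_def by blast

lemma bilip_line: "bilipschitz M f \<Longrightarrow> hdist (f (u, t)) (f (v, t)) \<le> M * \<bar>u - v\<bar>"
  using bilip_up[of M f "(u, t)" "(v, t)"] by (simp only: dpar_line)

lemma bilip_vert: "bilipschitz M f \<Longrightarrow> hdist (f (y, t)) (f (y, t')) \<le> M * sqrt \<bar>t - t'\<bar>"
  using bilip_up[of M f "(y, t)" "(y, t')"] by (simp only: dpar_vert)

lemma cmod_gf: "cmod (gf f sh t u - gf f sh' t' v) \<le> hdist (f (u + sh, t)) (f (v + sh', t'))"
  unfolding gf_def complex_diff complex_norm by (rule hdist_proj)

lemma gf_lip: "bilipschitz M f \<Longrightarrow> cmod (gf f sh t u - gf f sh t v) \<le> M * \<bar>u - v\<bar>"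
  using cmod_gf[of f sh t u sh t v] bilip_line[of M f "u + sh" t "v + sh"] by simp

lemma gf_vert: "bilipschitz M f \<Longrightarrow> cmod (gf f sh t y - gf f sh t' y) \<le> M * sqrt \<bar>t - t'\<bar>"
  using cmod_gf[of f sh t y sh t' y] bilip_vert[of M f "y + sh" t t'] by simp

lemma dlt_vert:
  assumes bl: "bilipschitz M f" and h: "h > 0"
  shows "\<bar>dlt (gf f sh t) x h - dlt (gf f sh t') x h\<bar> \<le> 4 * M * sqrt \<bar>t - t'\<bar> / h"
proof -
  let ?g = "gf f sh t" and ?g' = "gf f sh t'"
  let ?A = "?g x + ?g (x + h) - 2 * ?g (x + h/2)" and ?A' = "?g' x + ?g' (x + h) - 2 * ?g' (x + h/2)"
  have "?A - ?A' = (?g x - ?g' x) + (?g (x + h) - ?g' (x + h)) - 2 * (?g (x + h/2) - ?g' (x + h/2))"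
    by (simp add: algebra_simps)
  hence "cmod (?A - ?A') \<le> cmod ((?g x - ?g' x) + (?g (x + h) - ?g' (x + h))) + cmod (2 * (?g (x + h/2) - ?g' (x + h/2)))"
    using norm_triangle_ineq4 by metis
  also have "\<dots> \<le> (cmod (?g x - ?g' x) + cmod (?g (x + h) - ?g' (x + h))) + cmod (2 * (?g (x + h/2) - ?g' (x + h/2)))"
    by (intro add_mono norm_triangle_ineq order_refl)
  also have "\<dots> \<le> (M * sqrt \<bar>t - t'\<bar> + M * sqrt \<bar>t - t'\<bar>) + 2 * (M * sqrt \<bar>t - t'\<bar>)"
  proof -
    have a: "cmod (?g x - ?g' x) \<le> M * sqrt \<bar>t - t'\<bar>" by (rule gf_vert[OF bl])
    have b: "cmod (?g (x + h) - ?g' (x + h)) \<le> M * sqrt \<bar>t - t'\<bar>" by (rule gf_vert[OF bl])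
    have c: "cmod (?g (x + h/2) - ?g' (x + h/2)) \<le> M * sqrt \<bar>t - t'\<bar>" by (rule gf_vert[OF bl])
    have "cmod (2 * (?g (x + h/2) - ?g' (x + h/2))) = 2 * cmod (?g (x + h/2) - ?g' (x + h/2))"
      by (subst norm_mult) simp
    thus ?thesis using a b c by linarith
  qed
  finally have "cmod (?A - ?A') \<le> 4 * M * sqrt \<bar>t - t'\<bar>" by simp
  moreover have "\<bar>cmod ?A - cmod ?A'\<bar> \<le> cmod (?A - ?A')" by (rule norm_triangle_ineq3)
  ultimately have "\<bar>cmod ?A - cmod ?A'\<bar> \<le> 4 * M * sqrt \<bar>t - t'\<bar>" by linarith
  moreover have "dlt ?g x h - dlt ?g' x h = (cmod ?A - cmod ?A') / h"
    unfolding dlt_def by (simp add: diff_divide_distrib)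
  ultimately show ?thesis using h by (simp add: abs_divide divide_right_mono)
qed

lemma hdist_set_le:
  assumes "q \<in> L" shows "hdist_set p L \<le> hdist p q"
  unfolding hdist_set_def
proof (rule cInf_lower)
  show "hdist p q \<in> hdist p ` L" using assms by simp
  show "bdd_below (hdist p ` L)" by (rule bdd_belowI[where m = 0]) (auto simp: hdist_nonneg)
qed


lemma flat_line:
  assumes bl: "bilipschitz M f" and M: "M \<ge> 0" and R: "R > 0" and eta: "\<eta> \<ge> 0"
    and flat: "\<And>y. a \<le> y \<Longrightarrow> y \<le> a + R \<Longrightarrow> cmod (gf f sh t y - lin (gf f sh t) a R y) \<le> \<eta> * R"
  shows "\<exists>L. horizontal_line_H L \<and> (\<forall>y. a \<le> y \<longrightarrow> y \<le> a + R \<longrightarrow>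
            hdist_set (f (y + sh, t)) L \<le> max (\<eta> * R) (sqrt (\<eta> * R * M * R)))"
proof -
  let ?g = "gf f sh t"
  define \<gamma> where "\<gamma> y = f (y + sh, t)" for y
  define c where "c = ?g (a + R) - ?g a"
  define e where "e = (if c = 0 then 1 else c / of_real (cmod c))"
  have ce: "Im (cnj e * c) = 0"
  proof (cases "c = 0")
    case False
    have "cnj e * c = (c * cnj c) / of_real (cmod c)" using False by (simp add: e_def field_simps)
    also have "c * cnj c = of_real ((cmod c)^2)" by (metis complex_norm_square)
    finally have "cnj e * c = of_real ((cmod c)^2) / of_real (cmod c)" .
    thus ?thesis by (simp only: of_real_divide[symmetric] Im_complex_of_real)
  qed (simp add: e_def)
  have cme: "cmod e = 1" by (simp add: e_def norm_divide)
  define e1 where "e1 = Re e"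
  define e2 where "e2 = Im e"
  have e12: "e1^2 + e2^2 = 1" using cme unfolding e1_def e2_def by (metis cmod_power2 one_power2)
  have lipg: "hdist (\<gamma> u) (\<gamma> v) \<le> M * \<bar>u - v\<bar>" for u v
    unfolding \<gamma>_def using bilip_line[OF bl, of "u + sh" t "v + sh"] by simp
  have dev: "\<bar>e1 * (py (\<gamma> y) - py (\<gamma> a)) - e2 * (px (\<gamma> y) - px (\<gamma> a))\<bar> \<le> \<eta> * R"
    if "a \<le> y" "y \<le> a + R" for y
  proof -
    define lam where "lam = (y - a) / R"
    have z: "?g y - ?g a = (?g y - lin ?g a R y) + of_real lam * c"
      by (simp add: lin_def lam_def c_def)
    have "e1 * (py (\<gamma> y) - py (\<gamma> a)) - e2 * (px (\<gamma> y) - px (\<gamma> a)) = Im (cnj e * (?g y - ?g a))"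
      by (simp add: gf_def \<gamma>_def e1_def e2_def)
    also have "\<dots> = Im (cnj e * (?g y - lin ?g a R y))"
      unfolding z distrib_left using ce by (simp add: mult.left_commute)
    finally have eq: "e1 * (py (\<gamma> y) - py (\<gamma> a)) - e2 * (px (\<gamma> y) - px (\<gamma> a)) = Im (cnj e * (?g y - lin ?g a R y))" .
    have "\<bar>e1 * (py (\<gamma> y) - py (\<gamma> a)) - e2 * (px (\<gamma> y) - px (\<gamma> a))\<bar> \<le> cmod (cnj e * (?g y - lin ?g a R y))"
      unfolding eq by (rule abs_Im_le_cmod)
    also have "\<dots> = cmod (?g y - lin ?g a R y)" by (simp add: norm_mult cme)
    also have "\<dots> \<le> \<eta> * R" using flat that by simp
    finally show ?thesis .
  qed
  define L where "L = {hmult (\<gamma> a) (s * e1, s * e2, 0) | s. True}"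
  have hL: "horizontal_line_H L"
    unfolding horizontal_line_H_def L_def
  proof (intro exI conjI)
    show "(e1, e2) \<noteq> (0, 0)" using e12 by auto
  qed (rule refl)
  have "hdist_set (f (y + sh, t)) L \<le> max (\<eta> * R) (sqrt (\<eta> * R * M * R))"
    if y: "a \<le> y" "y \<le> a + R" for y
  proof -
    define s where "s = e1 * (px (\<gamma> y) - px (\<gamma> a)) + e2 * (py (\<gamma> y) - py (\<gamma> a))"
    have "hdist (\<gamma> y) (hmult (\<gamma> a) (s * e1, s * e2, 0)) \<le> max (\<eta> * R) (sqrt (\<eta> * R * M * (y - a)))"
      unfolding s_def
      by (rule area_lemma[OF lipg M y(1) e12]) (use eta R dev y in \<open>auto\<close>)
    also have "\<dots> \<le> max (\<eta> * R) (sqrt (\<eta> * R * M * R))"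
    proof -
      have "\<eta> * R * M * (y - a) \<le> \<eta> * R * M * R"
        using y eta R M by (intro mult_left_mono) auto
      thus ?thesis by (meson max.mono order_refl real_sqrt_le_iff)
    qed
    finally have "hdist (\<gamma> y) (hmult (\<gamma> a) (s * e1, s * e2, 0)) \<le> max (\<eta> * R) (sqrt (\<eta> * R * M * R))" .
    moreover have "hdist_set (\<gamma> y) L \<le> hdist (\<gamma> y) (hmult (\<gamma> a) (s * e1, s * e2, 0))"
      by (rule hdist_set_le) (auto simp: L_def)
    ultimately show ?thesis by (simp add: \<gamma>_def)
  qed
  thus ?thesis using hL by blast
qed


lemma ruler_le:
  assumes Rad: "Rad > 0" and rho: "\<rho>0 > 0"
    and H: "\<And>t'. \<bar>t' - ct\<bar> \<le> Rad^2 \<Longrightarrow> \<exists>L. horizontal_line_H L \<and>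
              (\<forall>y. \<bar>y - cy\<bar> \<le> Rad \<longrightarrow> hdist_set (f (y, t')) L \<le> \<rho>0 * Rad)"
  shows "ruler_coeff f (cy, ct) Rad \<le> \<rho>0"
proof -
  let ?S = "{\<rho>. \<rho> > 0 \<and> (\<forall>hl. horizontal_line_W hl \<longrightarrow>
      (\<exists>L. horizontal_line_H L \<and> f ` (hl \<inter> pball (cy, ct) Rad) \<subseteq> hnbhd L (\<rho> * Rad)))}"
  have "\<rho>0 \<in> ?S"
  proof (intro CollectI conjI allI impI)
    show "\<rho>0 > 0" by (rule rho)
    fix hl assume "horizontal_line_W hl"
    then obtain t' where hl: "hl = UNIV \<times> {t'}" by (auto simp: horizontal_line_W_def)
    show "\<exists>L. horizontal_line_H L \<and> f ` (hl \<inter> pball (cy, ct) Rad) \<subseteq> hnbhd L (\<rho>0 * Rad)"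
    proof (cases "\<bar>t' - ct\<bar> \<le> Rad^2")
      case True
      then obtain L where L: "horizontal_line_H L" "\<And>y. \<bar>y - cy\<bar> \<le> Rad \<Longrightarrow> hdist_set (f (y, t')) L \<le> \<rho>0 * Rad"
        using H by blast
      have "f ` (hl \<inter> pball (cy, ct) Rad) \<subseteq> hnbhd L (\<rho>0 * Rad)"
      proof
        fix p assume "p \<in> f ` (hl \<inter> pball (cy, ct) Rad)"
        then obtain v where v: "p = f v" "v \<in> hl" "v \<in> pball (cy, ct) Rad" by blast
        then obtain y where vy: "v = (y, t')" using hl by blast
        have y: "p = f (y, t')" "dpar (cy, ct) (y, t') \<le> Rad" using v vy by (simp_all add: pball_def)
        have "\<bar>y - cy\<bar> \<le> Rad" using y(2) by (simp add: dpar_def abs_minus_commute)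
        thus "p \<in> hnbhd L (\<rho>0 * Rad)" using L y by (simp add: hnbhd_def)
      qed
      thus ?thesis using L by blast
    next
      case False
      have "hl \<inter> pball (cy, ct) Rad = {}"
      proof (rule ccontr)
        assume "hl \<inter> pball (cy, ct) Rad \<noteq> {}"
        then obtain v where v: "v \<in> hl" "v \<in> pball (cy, ct) Rad" by blast
        then obtain y where vy: "v = (y, t')" using hl by blast
        have "dpar (cy, ct) (y, t') \<le> Rad" using v vy by (simp add: pball_def)
        hence "sqrt \<bar>ct - t'\<bar> \<le> Rad" by (simp add: dpar_def)
        hence "(sqrt \<bar>ct - t'\<bar>)^2 \<le> Rad^2" by (rule power_mono) simp
        hence "\<bar>t' - ct\<bar> \<le> Rad^2" by (simp add: abs_minus_commute)
        thus False using False by simp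
      qed
      moreover have "horizontal_line_H {hmult (0,0,0) (s * 1, s * 0, 0) | s. True}"
        unfolding horizontal_line_H_def
      proof (intro exI conjI)
        show "(1::real, 0::real) \<noteq> (0, 0)" by simp
      qed (rule refl)
      ultimately show ?thesis by blast
    qed
  qed
  moreover have "bdd_below ?S" by (rule bdd_belowI[where m = 0]) auto
  ultimately show ?thesis unfolding ruler_coeff_def by (rule cInf_lower)
qed


lemma pointwise_group:
  fixes F :: "'q set" and key :: "'q \<Rightarrow> 'k" and win :: "'q \<Rightarrow> real set" and \<Psi> :: "'k \<Rightarrow> real \<Rightarrow> real"
  assumes F: "finite F" and Big: "finite Big" "key ` F \<subseteq> Big"
    and nn: "\<And>\<kappa> t. \<Psi> \<kappa> t \<ge> 0"
    and count: "\<And>\<kappa>. (\<Sum>Q\<in>{Q\<in>F. key Q = \<kappa>}. indicator (win Q) t) \<le> cnt * indicator T t"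
    and bnd: "(\<Sum>\<kappa>\<in>Big. \<Psi> \<kappa> t) \<le> Bnd" and cnt: "cnt \<ge> 0"
  shows "(\<Sum>Q\<in>F. indicator (win Q) t * \<Psi> (key Q) t) \<le> cnt * Bnd * indicator T t"
proof -
  have "(\<Sum>Q\<in>F. indicator (win Q) t * \<Psi> (key Q) t) =
      (\<Sum>\<kappa>\<in>key ` F. \<Sum>Q\<in>{Q\<in>F. key Q = \<kappa>}. indicator (win Q) t * \<Psi> (key Q) t)"
    by (rule sum.image_gen[OF F])
  also have "\<dots> = (\<Sum>\<kappa>\<in>key ` F. (\<Sum>Q\<in>{Q\<in>F. key Q = \<kappa>}. indicator (win Q) t) * \<Psi> \<kappa> t)"
    by (rule sum.cong) (auto simp: sum_distrib_right intro!: sum.cong)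
  also have "\<dots> \<le> (\<Sum>\<kappa>\<in>key ` F. (cnt * indicator T t) * \<Psi> \<kappa> t)"
    by (rule sum_mono) (rule mult_right_mono[OF count nn])
  also have "\<dots> \<le> (\<Sum>\<kappa>\<in>Big. (cnt * indicator T t) * \<Psi> \<kappa> t)"
    by (rule sum_mono2[OF Big(1) Big(2)]) (simp add: nn cnt)
  also have "\<dots> = (cnt * indicator T t) * (\<Sum>\<kappa>\<in>Big. \<Psi> \<kappa> t)" by (simp add: sum_distrib_left)
  also have "\<dots> \<le> (cnt * indicator T t) * Bnd" by (rule mult_left_mono[OF bnd]) (simp add: cnt)
  finally show ?thesis by (simp add: algebra_simps)
qed

lemma abstract_sum:
  fixes F :: "'q set" and key :: "'q \<Rightarrow> 'k" and win :: "'q \<Rightarrow> real set" and \<Psi> :: "'k \<Rightarrow> real \<Rightarrow> real"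
    and wt :: "'q \<Rightarrow> real"
  assumes F: "finite F" and Big: "finite Big" "key ` F \<subseteq> Big"
    and nn: "\<And>\<kappa> t. \<Psi> \<kappa> t \<ge> 0"
    and meas: "\<And>\<kappa>. \<Psi> \<kappa> \<in> borel_measurable borel"
    and wmeas: "\<And>Q. Q \<in> F \<Longrightarrow> win Q \<in> sets borel"
    and charge: "\<And>Q. Q \<in> F \<Longrightarrow> ennreal (wt Q) \<le> ennreal K1 * (\<integral>\<^sup>+t. ennreal (indicator (win Q) t * \<Psi> (key Q) t) \<partial>lborel)"
    and count: "\<And>\<kappa> t. (\<Sum>Q\<in>{Q\<in>F. key Q = \<kappa>}. indicator (win Q) t) \<le> cnt * indicator {a..b} t"
    and bnd: "\<And>t. (\<Sum>\<kappa>\<in>Big. \<Psi> \<kappa> t) \<le> Bnd" and cnt: "cnt \<ge> 0" and K1: "K1 \<ge> 0" and ab: "a \<le> b"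
  shows "(\<Sum>Q\<in>F. ennreal (wt Q)) \<le> ennreal (K1 * cnt * Bnd * (b - a))"
proof -
  have Bnd: "Bnd \<ge> 0" using bnd[of 0] nn by (meson order_trans sum_nonneg)
  have m: "(\<lambda>t. ennreal (indicator (win Q) t * \<Psi> (key Q) t)) \<in> borel_measurable lborel" if "Q \<in> F" for Q
  proof -
    have "(\<lambda>t. indicator (win Q) t * \<Psi> (key Q) t) \<in> borel_measurable borel"
      using wmeas[OF that] meas[of "key Q"] by measurable
    thus ?thesis by simp
  qed
  have "(\<Sum>Q\<in>F. ennreal (wt Q)) \<le> (\<Sum>Q\<in>F. ennreal K1 * (\<integral>\<^sup>+t. ennreal (indicator (win Q) t * \<Psi> (key Q) t) \<partial>lborel))"
    by (rule sum_mono) (rule charge)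
  also have "\<dots> = ennreal K1 * (\<Sum>Q\<in>F. (\<integral>\<^sup>+t. ennreal (indicator (win Q) t * \<Psi> (key Q) t) \<partial>lborel))"
    by (simp add: sum_distrib_left)
  also have "(\<Sum>Q\<in>F. (\<integral>\<^sup>+t. ennreal (indicator (win Q) t * \<Psi> (key Q) t) \<partial>lborel)) =
      (\<integral>\<^sup>+t. (\<Sum>Q\<in>F. ennreal (indicator (win Q) t * \<Psi> (key Q) t)) \<partial>lborel)"
    by (rule nn_integral_sum[symmetric]) (rule m)
  also have "\<dots> \<le> (\<integral>\<^sup>+t. ennreal (cnt * Bnd) * indicator {a..b} t \<partial>lborel)"
  proof (rule nn_integral_mono)
    fix t
    have "(\<Sum>Q\<in>F. ennreal (indicator (win Q) t * \<Psi> (key Q) t)) = ennreal (\<Sum>Q\<in>F. indicator (win Q) t * \<Psi> (key Q) t)"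
      by (rule sum_ennreal) (simp add: nn)
    also have "\<dots> \<le> ennreal (cnt * Bnd * indicator {a..b} t)"
      by (rule ennreal_leI) (rule pointwise_group[OF F Big nn count bnd cnt])
    also have "\<dots> = ennreal (cnt * Bnd) * indicator {a..b} t"
      by (simp add: indicator_def)
    finally show "(\<Sum>Q\<in>F. ennreal (indicator (win Q) t * \<Psi> (key Q) t)) \<le> ennreal (cnt * Bnd) * indicator {a..b} t" .
  qed
  also have "\<dots> = ennreal (cnt * Bnd) * ennreal (b - a)"
    using ab by (simp add: nn_integral_cmult_indicator)
  finally have "(\<Sum>Q\<in>F. ennreal (wt Q)) \<le> ennreal K1 * (ennreal (cnt * Bnd) * ennreal (b - a))"
    by (simp add: mult_left_mono)
  also have "\<dots> = ennreal (K1 * cnt * Bnd * (b - a))"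
  proof -
    have cb: "cnt * Bnd \<ge> 0" using cnt Bnd by simp
    have e1: "ennreal (cnt * Bnd) * ennreal (b - a) = ennreal (cnt * Bnd * (b - a))"
      by (rule ennreal_mult[symmetric]) (use cb ab in auto)
    have e2: "ennreal K1 * ennreal (cnt * Bnd * (b - a)) = ennreal (K1 * (cnt * Bnd * (b - a)))"
      by (rule ennreal_mult[symmetric]) (use cb ab K1 in auto)
    show ?thesis unfolding e1 e2 by (simp only: mult.assoc)
  qed
  finally show ?thesis .
qed


lemma two_pow_mod3: "(2::int)^D mod 3 \<noteq> 0"
proof (induction D)
  case 0 then show ?case by simp
next
  case (Suc D)
  have "(2::int)^Suc D mod 3 = (2 * ((2::int)^D mod 3)) mod 3" by (simp add: mod_mult_right_eq)
  moreover have "(2::int)^D mod 3 = 1 \<or> (2::int)^D mod 3 = 2" using Suc by auto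
  ultimately show ?case by auto
qed

lemma no_grid_point:
  fixes u v R :: real
  assumes R: "R > 0" and uv: "u \<le> v" and no: "\<And>p::int. \<not> (u < of_int p * R \<and> of_int p * R < v)"
  shows "\<exists>iK::int. of_int iK * R \<le> u \<and> v \<le> of_int (iK + 1) * R"
proof -
  define iK where "iK = \<lfloor>u / R\<rfloor>"
  have a: "of_int iK * R \<le> u" using R by (simp add: iK_def pos_le_divide_eq[symmetric])
  have b: "u < of_int (iK + 1) * R"
  proof -
    have "u / R < of_int (iK + 1)" unfolding iK_def by linarith
    thus ?thesis using R by (simp add: pos_divide_less_eq)
  qed
  have "v \<le> of_int (iK + 1) * R"
  proof (rule ccontr)
    assume "\<not> v \<le> of_int (iK + 1) * R"
    thus False using no[of "iK + 1"] b by simp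
  qed
  thus ?thesis using a by blast
qed

lemma align:
  fixes H R u v :: real and D :: nat
  assumes H: "H > 0" and R: "R = H / 2^D" and uv: "u \<le> v" and small: "v - u < R / 3"
  shows "\<exists>\<sigma>::nat. \<sigma> < 2 \<and> (\<exists>iK::int. of_int iK * R \<le> u - real \<sigma> * H / 3 \<and> v - real \<sigma> * H / 3 \<le> of_int (iK + 1) * R)"
proof -
  have Rp: "R > 0" using H R by simp
  show ?thesis
  proof (cases "\<exists>p::int. u < of_int p * R \<and> of_int p * R < v")
    case False
    then obtain iK where "of_int iK * R \<le> u \<and> v \<le> of_int (iK + 1) * R"
      using no_grid_point[OF Rp uv] by blast
    thus ?thesis by (intro exI[of _ 0]) auto
  next
    case True
    then obtain p :: int where p: "u < of_int p * R" "of_int p * R < v" by blast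
    have no: "\<not> (u - H/3 < of_int p' * R \<and> of_int p' * R < v - H/3)" for p' :: int
    proof
      assume q: "u - H/3 < of_int p' * R \<and> of_int p' * R < v - H/3"
      have HR: "H = 2^D * R" using R by simp
      define X where "X = H/3 + of_int p' * R - of_int p * R"
      have r1: "u < H/3 + of_int p' * R" "H/3 + of_int p' * R < v" using q by auto
      have xs: "\<bar>X\<bar> < R / 3"
        unfolding abs_less_iff X_def using r1 p small by linarith
      have eq: "(2^D + 3 * of_int (p' - p)) * R = 3 * X"
        unfolding HR X_def by (simp add: algebra_simps)
      have a3: "\<bar>3 * X\<bar> = 3 * \<bar>X\<bar>" by (simp add: abs_mult)
      have "\<bar>(2^D + 3 * of_int (p' - p)) * R\<bar> < R" unfolding eq a3 using xs by linarith
      hence "\<bar>2^D + 3 * of_int (p' - p)\<bar> * R < 1 * R" using Rp by (simp add: abs_mult)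
      hence "\<bar>(2::real)^D + 3 * of_int (p' - p)\<bar> < 1" using Rp mult_less_cancel_right_pos by blast
      hence "\<bar>of_int ((2::int)^D + 3 * (p' - p))\<bar> < (1::real)" by simp
      hence "\<bar>(2::int)^D + 3 * (p' - p)\<bar> < 1" by linarith
      hence "(2::int)^D + 3 * (p' - p) = 0" by simp
      hence "(2::int)^D mod 3 = 0" by (metis add.commute add.right_neutral minus_add_cancel mod_mult_self1 mod_0 mult.commute)
      thus False using two_pow_mod3[of D] by simp
    qed
    obtain iK where "of_int iK * R \<le> u - H/3 \<and> v - H/3 \<le> of_int (iK + 1) * R"
      using no_grid_point[OF Rp _ no] uv by force
    thus ?thesis by (intro exI[of _ 1]) auto
  qed
qed


lemma int_bounds_from_real:
  fixes it :: int and x :: real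
  assumes "of_int it \<le> x + 1/2" "x - 4/3 \<le> of_int it"
  shows "\<lfloor>x\<rfloor> - 2 \<le> it \<and> it \<le> \<lfloor>x\<rfloor> + 1"
proof -
  have f1: "(of_int \<lfloor>x\<rfloor> :: real) \<le> x" "x < (of_int \<lfloor>x\<rfloor> :: real) + 1" by linarith+
  have "(of_int it :: real) < of_int (\<lfloor>x\<rfloor> + 2)" using assms f1 by simp linarith
  hence a: "it < \<lfloor>x\<rfloor> + 2" by (simp only: of_int_less_iff)
  have "(of_int (\<lfloor>x\<rfloor> - 3) :: real) < (of_int it :: real)" using assms f1 by simp linarith
  hence b: "\<lfloor>x\<rfloor> - 3 < it" by (simp only: of_int_less_iff)
  show ?thesis using a b by simp
qed

lemma bad_data:
  fixes f :: "wpt \<Rightarrow> heis" and M \<epsilon> C \<eta> \<theta> l0 H y0 cy ct r :: real and m N e :: nat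
  assumes bl: "bilipschitz M f" and M: "M \<ge> 1" and eps: "\<epsilon> > 0" and C: "C \<ge> 1"
    and m: "6 * C < 2^m"
    and eta: "\<eta> > 0" "\<eta> \<le> M" "sqrt (\<eta> * M) * 2^(m+1) \<le> \<epsilon> * C"
    and theta: "\<theta> = \<eta> / 2"
    and NN: "2 * M / 2^N \<le> \<eta> / 2"
    and l0: "l0 > 0" and H: "H = 2^(m+1) * l0"
    and r: "r = l0 / 2^e"
    and cy: "y0 \<le> cy" "cy \<le> y0 + l0"
    and bad: "\<epsilon> \<le> ruler_coeff f (cy, ct) (C * r)"
  shows "\<exists>\<sigma> it d i t'. \<sigma> < (2::nat) \<and> \<lfloor>y0 / H\<rfloor> - 2 \<le> it \<and> it \<le> \<lfloor>y0 / H\<rfloor> + 1 \<and> d < N \<and>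
     i < 2^(e+1+d) \<and> \<bar>t' - ct\<bar> \<le> (C * r)^2 \<and>
     \<theta> < dlt (gf f (real \<sigma> * H / 3) t') (of_int it * H + real i * H / 2^(e+1+d)) (H / 2^(e+1+d)) \<and>
     \<bar>cy - real \<sigma> * H / 3 - (of_int it * H + real i * H / 2^(e+1+d))\<bar> \<le> 2^m * r"
proof -
  have rpos: "r > 0" using l0 r by simp
  have Hpos: "H > 0" using l0 H by simp
  define R where "R = 2^m * r"
  have Rpos: "R > 0" using rpos by (simp add: R_def)
  have R_eq: "R = H / 2^(e+1)"
    unfolding R_def r H by (simp add: power_add field_simps)
  have M0: "M \<ge> 0" using M by simp
  have th0: "\<theta> \<ge> 0" using eta theta by simp
  have uv: "cy - C * r \<le> cy + C * r" using C rpos by simp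
  have small: "(cy + C * r) - (cy - C * r) < R / 3"
  proof -
    have "6 * C * r < 2^m * r" using m rpos by simp
    thus ?thesis by (simp add: R_def)
  qed
  obtain \<sigma> :: nat and iK :: int where \<sigma>: "\<sigma> < 2"
    and iK: "of_int iK * R \<le> cy - C * r - real \<sigma> * H / 3" "cy + C * r - real \<sigma> * H / 3 \<le> of_int (iK + 1) * R"
    using align[OF Hpos R_eq uv small] by blast
  define sh where "sh = real \<sigma> * H / 3"
  define aK where "aK = of_int iK * R"
  have K1: "aK \<le> cy - C * r - sh" and K2: "cy + C * r - sh \<le> aK + R"
    using iK by (simp_all add: sh_def aK_def algebra_simps)
  have ex: "\<exists>t' d i. d < N \<and> i < (2::nat)^d \<and> \<bar>t' - ct\<bar> \<le> (C * r)^2 \<and>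
      \<theta> < dlt (gf f sh t') (aK + real i * R / 2^d) (R / 2^d)"
  proof (rule ccontr)
    assume nex: "\<not> ?thesis"
    have Lex: "\<exists>L. horizontal_line_H L \<and> (\<forall>y. \<bar>y - cy\<bar> \<le> C * r \<longrightarrow> hdist_set (f (y, t')) L \<le> \<epsilon> / 2 * (C * r))"
      if t': "\<bar>t' - ct\<bar> \<le> (C * r)^2" for t'
    proof -
      have dl: "dlt (gf f sh t') (aK + real i * R / 2^d) (R / 2^d) \<le> \<theta>" if "d < N" "i < 2^d" for d i
        using nex t' that by (meson not_less)
      have flat: "cmod (gf f sh t' y - lin (gf f sh t') aK R y) \<le> \<eta> * R" if "aK \<le> y" "y \<le> aK + R" for y
      proof -
        have a: "cmod (gf f sh t' y - lin (gf f sh t') aK R y) \<le> \<theta> * R + 2 * M * R / 2^N"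
          by (rule sup_dev[OF gf_lip[OF bl] M0 th0 Rpos dl that])
        have b: "2 * M * R / 2^N = (2 * M / 2^N) * R" by simp
        have c: "(2 * M / 2^N) * R \<le> (\<eta> / 2) * R" using NN Rpos by (intro mult_right_mono) auto
        have "cmod (gf f sh t' y - lin (gf f sh t') aK R y) \<le> \<theta> * R + \<eta> / 2 * R" using a b c by linarith
        moreover have "\<theta> * R + \<eta> / 2 * R = \<eta> * R" unfolding theta by (simp add: field_simps)
        ultimately show ?thesis by linarith
      qed
      obtain L where L: "horizontal_line_H L" and
        Lb: "\<And>y. aK \<le> y \<Longrightarrow> y \<le> aK + R \<Longrightarrow> hdist_set (f (y + sh, t')) L \<le> max (\<eta> * R) (sqrt (\<eta> * R * M * R))"
        using flat_line[OF bl M0 Rpos _ flat] eta by auto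
      have bnd: "max (\<eta> * R) (sqrt (\<eta> * R * M * R)) \<le> \<epsilon> / 2 * (C * r)"
      proof -
        have s: "sqrt (\<eta> * R * M * R) = R * sqrt (\<eta> * M)"
        proof -
          have "\<eta> * R * M * R = R^2 * (\<eta> * M)" by (simp add: power2_eq_square)
          thus ?thesis using Rpos by (simp add: real_sqrt_mult)
        qed
        have e1: "\<eta> \<le> sqrt (\<eta> * M)"
        proof -
          have "\<eta> * \<eta> \<le> \<eta> * M" using eta by (intro mult_left_mono) auto
          thus ?thesis using eta by (simp add: real_le_rsqrt power2_eq_square)
        qed
        have e2: "R * sqrt (\<eta> * M) \<le> \<epsilon> / 2 * (C * r)"
        proof -
          have "R * sqrt (\<eta> * M) = r / 2 * (sqrt (\<eta> * M) * 2^(m+1))" by (simp add: R_def power_add)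
          also have "\<dots> \<le> r / 2 * (\<epsilon> * C)" using eta(3) rpos by (intro mult_left_mono) auto
          also have "r / 2 * (\<epsilon> * C) = \<epsilon> / 2 * (C * r)" by simp
          finally show ?thesis .
        qed
        have "\<eta> * R \<le> R * sqrt (\<eta> * M)" using e1 Rpos by (simp add: mult.commute)
        thus ?thesis using s e2 by simp
      qed
      have "hdist_set (f (y, t')) L \<le> \<epsilon> / 2 * (C * r)" if "\<bar>y - cy\<bar> \<le> C * r" for y
      proof -
        have "aK \<le> y - sh" "y - sh \<le> aK + R" using that K1 K2 by auto
        hence "hdist_set (f ((y - sh) + sh, t')) L \<le> max (\<eta> * R) (sqrt (\<eta> * R * M * R))" by (rule Lb)
        thus ?thesis using bnd by simp
      qed
      thus ?thesis using L by blast
    qed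
    have "ruler_coeff f (cy, ct) (C * r) \<le> \<epsilon> / 2"
      by (rule ruler_le) (use C rpos eps Lex in auto)
    thus False using bad eps by simp
  qed
  then obtain t' d i where d: "d < N" and i: "i < (2::nat)^d" and t': "\<bar>t' - ct\<bar> \<le> (C * r)^2"
    and dl: "\<theta> < dlt (gf f sh t') (aK + real i * R / 2^d) (R / 2^d)" by blast
  define P :: int where "P = 2^(e+1)"
  have Ppos: "P > 0" by (simp add: P_def)
  define it where "it = iK div P"
  define ir where "ir = iK mod P"
  have ir: "0 \<le> ir" "ir < P" using Ppos by (simp_all add: ir_def)
  have iKeq: "iK = it * P + ir" by (simp add: it_def ir_def)
  have PR: "of_int P * R = H" by (simp add: P_def R_eq)
  define i' where "i' = nat ir * 2^d + i"
  have i'lt: "i' < 2^(e+1+d)"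
  proof -
    have "nat ir < 2^(e+1)" using ir by (simp add: P_def nat_less_iff)
    hence "nat ir + 1 \<le> 2^(e+1)" by simp
    hence "(nat ir + 1) * 2^d \<le> 2^(e+1) * (2::nat)^d" by (rule mult_right_mono) simp
    thus ?thesis using i by (simp add: i'_def power_add algebra_simps)
  qed
  have real_i': "real i' = of_int ir * 2^d + real i" using ir by (simp add: i'_def)
  have Rd: "R / 2^d = H / 2^(e+1+d)" by (simp add: R_eq power_add)
  have aKeq: "aK = of_int it * H + of_int ir * R"
    unfolding aK_def iKeq using PR by (simp add: algebra_simps)
  have xJ: "aK + real i * R / 2^d = of_int it * H + real i' * H / 2^(e+1+d)"
  proof -
    have "of_int ir * R = of_int ir * 2^d * (R / 2^d)" by simp
    hence "aK + real i * R / 2^d = of_int it * H + (of_int ir * 2^d + real i) * (R / 2^d)"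
      unfolding aKeq by (simp add: algebra_simps)
    also have "\<dots> = of_int it * H + real i' * H / 2^(e+1+d)" unfolding real_i' Rd by simp
    finally show ?thesis .
  qed
  have xin: "aK \<le> aK + real i * R / 2^d" "aK + real i * R / 2^d \<le> aK + R"
  proof -
    show "aK \<le> aK + real i * R / 2^d" using Rpos by simp
    have "real i \<le> 2^d" using i by (metis less_imp_le of_nat_le_iff of_nat_numeral of_nat_power)
    hence "real i * R \<le> 2^d * R" using Rpos by (intro mult_right_mono) auto
    thus "aK + real i * R / 2^d \<le> aK + R" by (simp add: divide_le_eq mult.commute)
  qed
  have Cr0: "0 \<le> C * r" using C rpos by simp
  have cyin: "aK \<le> cy - sh" "cy - sh \<le> aK + R" using K1 K2 Cr0 by linarith+
  have dist: "\<bar>cy - sh - (of_int it * H + real i' * H / 2^(e+1+d))\<bar> \<le> 2^m * r"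
  proof -
    have z: "0 \<le> real i * R / 2^d" using Rpos by simp
    show ?thesis unfolding xJ[symmetric] R_def[symmetric] abs_le_iff using xin(2) cyin z by linarith
  qed
  have itb: "of_int it * H \<le> aK" "aK + R \<le> of_int it * H + H"
  proof -
    show "of_int it * H \<le> aK" unfolding aKeq using ir Rpos by simp
    have "of_int (ir + 1) * R \<le> of_int P * R" using ir Rpos by (intro mult_right_mono) auto
    thus "aK + R \<le> of_int it * H + H" unfolding aKeq PR by (simp add: algebra_simps)
  qed
  have sh: "0 \<le> sh" "sh \<le> H / 3" using \<sigma> Hpos by (auto simp: sh_def)
  have l0H: "l0 \<le> H / 2"
  proof -
    have "(2::real) \<le> 2^(m+1)" by (simp add: power_add)
    hence "2 * l0 \<le> 2^(m+1) * l0" using l0 by (intro mult_right_mono) auto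
    thus ?thesis by (simp add: H)
  qed
  have up: "of_int it * H \<le> y0 + H / 2" using itb cyin sh cy l0H by linarith
  have lo: "y0 - H / 3 \<le> of_int it * H + H" using itb cyin sh cy by linarith
  have "of_int it \<le> y0 / H + 1/2"
  proof -
    have eq: "(y0 / H + 1/2) * H = y0 + H / 2" using Hpos by (simp add: field_simps)
    have "of_int it * H \<le> (y0 / H + 1/2) * H" unfolding eq by (rule up)
    thus ?thesis using Hpos by simp
  qed
  moreover have "y0 / H - 4/3 \<le> of_int it"
  proof -
    have eq: "(y0 / H - 4/3) * H = (y0 - H / 3) - H" using Hpos by (simp add: field_simps)
    have "(y0 / H - 4/3) * H \<le> of_int it * H" unfolding eq using lo by linarith
    thus ?thesis using Hpos by simp
  qed
  ultimately have itr: "\<lfloor>y0 / H\<rfloor> - 2 \<le> it \<and> it \<le> \<lfloor>y0 / H\<rfloor> + 1" by (rule int_bounds_from_real)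
  have dl': "\<theta> < dlt (gf f (real \<sigma> * H / 3) t') (of_int it * H + real i' * H / 2^(e+1+d)) (H / 2^(e+1+d))"
    using dl unfolding xJ Rd sh_def .
  show ?thesis
    using \<sigma> itr d i'lt t' dl' dist unfolding sh_def by blast
qed


lemma gf_cont:
  assumes bl: "bilipschitz M f" and M: "M \<ge> 0"
  shows "continuous_on UNIV (\<lambda>t. gf f sh t y)"
  unfolding continuous_on_iff
proof (intro ballI allI impI)
  fix x :: real and e :: real assume e: "e > 0"
  define \<delta> where "\<delta> = (e / (M + 1))^2"
  have \<delta>: "\<delta> > 0" using e M by (simp add: \<delta>_def)
  show "\<exists>\<delta>>0. \<forall>x'\<in>UNIV. dist x' x < \<delta> \<longrightarrow> dist (gf f sh x' y) (gf f sh x y) < e"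
  proof (intro exI conjI ballI impI)
    show "\<delta> > 0" by (rule \<delta>)
    fix x' assume "dist x' x < \<delta>"
    hence d: "\<bar>x' - x\<bar> < (e / (M + 1))^2" by (simp add: dist_real_def \<delta>_def)
    have s: "sqrt \<bar>x' - x\<bar> < e / (M + 1)"
    proof -
      have "sqrt \<bar>x' - x\<bar> < sqrt ((e / (M + 1))^2)" using d by (rule real_sqrt_less_mono)
      also have "\<dots> = e / (M + 1)" using e M by simp
      finally show ?thesis .
    qed
    have "dist (gf f sh x' y) (gf f sh x y) = cmod (gf f sh x' y - gf f sh x y)" by (simp add: dist_norm)
    also have "\<dots> \<le> M * sqrt \<bar>x' - x\<bar>" by (rule gf_vert[OF bl])
    also have "\<dots> \<le> (M + 1) * sqrt \<bar>x' - x\<bar>" by (intro mult_right_mono) auto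
    also have "\<dots> < (M + 1) * (e / (M + 1))" using s M by (intro mult_strict_left_mono) auto
    also have "\<dots> = e" using M by simp
    finally show "dist (gf f sh x' y) (gf f sh x y) < e" .
  qed
qed

lemma dlt_meas:
  assumes bl: "bilipschitz M f" and M: "M \<ge> 0"
  shows "(\<lambda>t. (dlt (gf f sh t) x h)^2 * h) \<in> borel_measurable borel"
proof (rule borel_measurable_continuous_onI)
  have c1: "continuous_on UNIV (\<lambda>t. gf f sh t z)" for z by (rule gf_cont[OF bl M])
  show "continuous_on UNIV (\<lambda>t. (dlt (gf f sh t) x h)^2 * h)"
    unfolding dlt_def divide_inverse by (intro continuous_intros c1)
qed

lemma card_int_interval:
  fixes A w :: real
  assumes w: "w \<ge> 0"
  shows "finite {k::int. A \<le> of_int k \<and> of_int k \<le> A + w}"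
    and "real (card {k::int. A \<le> of_int k \<and> of_int k \<le> A + w}) \<le> w + 1"
proof -
  have eq: "{k::int. A \<le> of_int k \<and> of_int k \<le> A + w} = {\<lceil>A\<rceil>..\<lfloor>A + w\<rfloor>}"
    by (auto simp: ceiling_le_iff le_floor_iff)
  show "finite {k::int. A \<le> of_int k \<and> of_int k \<le> A + w}" unfolding eq by simp
  have c: "card {\<lceil>A\<rceil>..\<lfloor>A + w\<rfloor>} = nat (\<lfloor>A + w\<rfloor> - \<lceil>A\<rceil> + 1)" by simp
  have d: "of_int (\<lfloor>A + w\<rfloor> - \<lceil>A\<rceil>) \<le> w"
  proof -
    have "of_int \<lfloor>A + w\<rfloor> \<le> A + w" by (rule of_int_floor_le)
    moreover have "A \<le> of_int \<lceil>A\<rceil>" by (rule le_of_int_ceiling)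
    ultimately show ?thesis by (simp only: of_int_diff; linarith)
  qed
  show "real (card {k::int. A \<le> of_int k \<and> of_int k \<le> A + w}) \<le> w + 1"
  proof (cases "\<lfloor>A + w\<rfloor> - \<lceil>A\<rceil> + 1 \<ge> 0")
    case True
    hence "real (card {k::int. A \<le> of_int k \<and> of_int k \<le> A + w}) = of_int (\<lfloor>A + w\<rfloor> - \<lceil>A\<rceil> + 1)"
      unfolding eq c by simp
    thus ?thesis using d by simp
  next
    case False
    hence "card {k::int. A \<le> of_int k \<and> of_int k \<le> A + w} = 0" unfolding eq c by simp
    thus ?thesis using w by simp
  qed
qed

lemma charge:
  fixes f :: "wpt \<Rightarrow> heis"
  assumes bl: "bilipschitz M f" and M: "M \<ge> 1" and th: "\<theta> > 0" and h: "h > 0"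
    and dl: "\<theta> < dlt (gf f sh t') x h" and r: "r > 0" "r \<le> 2^d * h" and dN: "d < N"
  shows "ennreal (r^3) \<le> ennreal (8^N * 128 * M^2 / \<theta>^4) *
     (\<integral>\<^sup>+t. ennreal (indicator {t' - (\<theta> * h / (8 * M))^2 .. t' + (\<theta> * h / (8 * M))^2} t * ((dlt (gf f sh t) x h)^2 * h)) \<partial>lborel)"
proof -
  define w where "w = (\<theta> * h / (8 * M))^2"
  define v where "v = (\<theta> / 2)^2 * h"
  have Mp: "M > 0" using M by simp
  have s0: "\<theta> * h / (8 * M) \<ge> 0" using th h Mp by simp
  have pw: "ennreal (v * indicator {t' - w .. t' + w} t) \<le> ennreal (indicator {t' - w .. t' + w} t * ((dlt (gf f sh t) x h)^2 * h))" for t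
  proof (cases "t \<in> {t' - w .. t' + w}")
    case True
    hence tw: "\<bar>t - t'\<bar> \<le> w" by auto
    have "sqrt \<bar>t - t'\<bar> \<le> sqrt w" using tw by simp
    also have "sqrt w = \<theta> * h / (8 * M)" unfolding w_def real_sqrt_abs using s0 by (rule abs_of_nonneg)
    finally have sq: "sqrt \<bar>t - t'\<bar> \<le> \<theta> * h / (8 * M)" .
    have "\<bar>dlt (gf f sh t) x h - dlt (gf f sh t') x h\<bar> \<le> 4 * M * sqrt \<bar>t - t'\<bar> / h"
      by (rule dlt_vert[OF bl h])
    also have "\<dots> \<le> 4 * M * (\<theta> * h / (8 * M)) / h" using sq Mp h by (intro divide_right_mono mult_left_mono) auto
    also have "\<dots> = \<theta> / 2" using Mp h by (simp add: field_simps)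
    finally have "\<theta> / 2 \<le> dlt (gf f sh t) x h" using dl by linarith
    hence "(\<theta> / 2)^2 \<le> (dlt (gf f sh t) x h)^2" using th by (intro power_mono) auto
    hence "v \<le> (dlt (gf f sh t) x h)^2 * h" unfolding v_def using h by (intro mult_right_mono) auto
    thus ?thesis using True by (intro ennreal_leI) simp
  next
    case False
    thus ?thesis by simp
  qed
  have w0: "w \<ge> 0" by (simp add: w_def)
  have v0: "v \<ge> 0" using h by (simp add: v_def)
  have "(\<integral>\<^sup>+t. ennreal (v * indicator {t' - w .. t' + w} t) \<partial>lborel) = ennreal v * ennreal (2 * w)"
  proof -
    have "(\<integral>\<^sup>+t. ennreal (v * indicator {t' - w .. t' + w} t) \<partial>lborel) = (\<integral>\<^sup>+t. ennreal v * indicator {t' - w .. t' + w} t \<partial>lborel)"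
      by (rule nn_integral_cong) (simp add: indicator_def)
    also have "\<dots> = ennreal v * emeasure lborel {t' - w .. t' + w}" by (rule nn_integral_cmult_indicator) simp
    also have "emeasure lborel {t' - w .. t' + w} = ennreal (2 * w)" using w0 by simp
    finally show ?thesis .
  qed
  moreover have "(\<integral>\<^sup>+t. ennreal (v * indicator {t' - w .. t' + w} t) \<partial>lborel) \<le> (\<integral>\<^sup>+t. ennreal (indicator {t' - w .. t' + w} t * ((dlt (gf f sh t) x h)^2 * h)) \<partial>lborel)"
    by (intro nn_integral_mono pw)
  moreover have "ennreal (v * (2 * w)) = ennreal v * ennreal (2 * w)" by (rule ennreal_mult) (use v0 w0 in auto)
  ultimately have lowb: "ennreal (v * (2 * w)) \<le> (\<integral>\<^sup>+t. ennreal (indicator {t' - w .. t' + w} t * ((dlt (gf f sh t) x h)^2 * h)) \<partial>lborel)"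
    by simp
  have K0: "8^N * 128 * M^2 / \<theta>^4 \<ge> 0" by simp
  have key: "r^3 \<le> (8^N * 128 * M^2 / \<theta>^4) * (v * (2 * w))"
  proof -
    have "(8^N * 128 * M^2 / \<theta>^4) * (v * (2 * w)) = 8^N * h^3"
      using th Mp unfolding v_def w_def by (simp add: power2_eq_square field_simps) (simp add: power_def eval_nat_numeral)
    moreover have "r^3 \<le> (2^d * h)^3" using r by (intro power_mono) auto
    moreover have "(2^d * h)^3 = (8::real)^d * h^3" by (simp add: power_mult_distrib power_mult[symmetric] mult.commute[of d 3] power_mult)
    moreover have "(8::real)^d \<le> 8^N" using dN by (intro power_increasing) auto
    hence "(8::real)^d * h^3 \<le> 8^N * h^3" using h by (intro mult_right_mono) auto
    ultimately show ?thesis by linarith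
  qed
  have "ennreal (r^3) \<le> ennreal ((8^N * 128 * M^2 / \<theta>^4) * (v * (2 * w)))" by (rule ennreal_leI[OF key])
  also have "\<dots> = ennreal (8^N * 128 * M^2 / \<theta>^4) * ennreal (v * (2 * w))"
    by (rule ennreal_mult) (use K0 v0 w0 in auto)
  also have "\<dots> \<le> ennreal (8^N * 128 * M^2 / \<theta>^4) * (\<integral>\<^sup>+t. ennreal (indicator {t' - w .. t' + w} t * ((dlt (gf f sh t) x h)^2 * h)) \<partial>lborel)"
    by (rule mult_left_mono[OF lowb]) simp
  finally show ?thesis unfolding w_def .
qed


lemma sum_prod_split: "finite A \<Longrightarrow> finite B \<Longrightarrow> sum g (A \<times> B) = (\<Sum>a\<in>A. \<Sum>b\<in>B. g (a, b))"
  by (simp add: sum.cartesian_product)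
lemma sum_sigma_split: "finite A \<Longrightarrow> (\<And>a. a \<in> A \<Longrightarrow> finite (B a)) \<Longrightarrow> sum g (Sigma A B) = (\<Sum>a\<in>A. \<Sum>b\<in>B a. g (a, b))"
  by (simp add: sum.Sigma)

lemma sum_indicator_card:
  assumes "finite A"
  shows "(\<Sum>Q\<in>A. indicator (W Q) t) = real (card {Q\<in>A. t \<in> W Q})"
proof -
  have "(\<Sum>Q\<in>A. indicator (W Q) t) = (\<Sum>Q\<in>A. if t \<in> W Q then 1 else (0::real))"
    by (intro sum.cong) (auto simp: indicator_def)
  also have "\<dots> = (\<Sum>Q\<in>{Q\<in>A. t \<in> W Q}. 1)" using assms by (rule sum.inter_filter[symmetric])
  also have "\<dots> = real (card {Q\<in>A. t \<in> W Q})" by simp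
  finally show ?thesis .
qed

lemma constants:
  fixes M C \<epsilon> :: real
  assumes M: "M \<ge> 1" and eps: "0 < \<epsilon>" "\<epsilon> \<le> 1" and C: "C \<ge> 1" and m: "6 * C < 2^m"
  defines "\<eta> \<equiv> (\<epsilon> * C)^2 / (M * 4^(m+1))"
  shows "\<eta> > 0" "\<eta> \<le> M" "sqrt (\<eta> * M) * 2^(m+1) \<le> \<epsilon> * C"
proof -
  show "\<eta> > 0" using M eps C by (simp add: \<eta>_def)
  have f4: "(4::real)^(m+1) = (2^(m+1))^2"
  proof -
    have "(4::real)^(m+1) = (2^2)^(m+1)" by simp
    also have "\<dots> = (2^(m+1))^2" by (simp only: power_mult[symmetric] mult.commute)
    finally show ?thesis .
  qed
  have "\<epsilon> * C \<le> C" using eps C by simp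
  hence a: "(\<epsilon> * C)^2 \<le> C^2" using eps C by (intro power_mono) auto
  have "C \<le> 2^(m+1)" using m C by (simp add: power_add)
  hence "C^2 \<le> (2^(m+1))^2" using C by (intro power_mono) auto
  hence b: "(\<epsilon> * C)^2 \<le> 4^(m+1)" using a f4 by simp
  have "\<eta> \<le> 4^(m+1) / (M * 4^(m+1))" unfolding \<eta>_def using b M by (intro divide_right_mono) auto
  also have "\<dots> = 1 / M" by simp
  also have "\<dots> \<le> M" using M by (simp add: divide_le_eq) (smt (verit) mult_le_cancel_left1)
  finally show "\<eta> \<le> M" .
  have "\<eta> * M = (\<epsilon> * C / 2^(m+1))^2" using M unfolding \<eta>_def f4 by (simp add: power_divide)
  hence "sqrt (\<eta> * M) = \<epsilon> * C / 2^(m+1)" using eps C by simp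
  thus "sqrt (\<eta> * M) * 2^(m+1) \<le> \<epsilon> * C" by simp
qed


lemma grid_range:
  fixes rr X B :: real and k :: int
  assumes rr: "rr > 0" and h: "\<bar>(of_int k + 1/2) * rr - X\<bar> \<le> B * rr"
  shows "X / rr - 1/2 - B \<le> of_int k \<and> of_int k \<le> (X / rr - 1/2 - B) + 2 * B"
proof -
  have "\<bar>((of_int k + 1/2) - X / rr) * rr\<bar> \<le> B * rr" using h rr by (simp add: algebra_simps)
  hence "\<bar>(of_int k + 1/2) - X / rr\<bar> * rr \<le> B * rr" using rr by (simp add: abs_mult)
  hence "\<bar>(of_int k + 1/2) - X / rr\<bar> \<le> B" using rr by simp
  thus ?thesis unfolding abs_le_iff by linarith
qed


theorem proposition4p3:
  fixes M C \<epsilon> :: real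
  assumes "M \<ge> 1" and "0 < \<epsilon>" and "\<epsilon> \<le> 1" and "C \<ge> 1"
  shows "\<exists>C'. \<forall>f. bilipschitz M f \<longrightarrow>
           (\<forall>Q0\<in>dyadic.
              (\<Sum>\<^sub>\<infinity>Q\<in>{Q \<in> bad_set f C \<epsilon>. Q \<subseteq> Q0}. ennreal (side_len Q ^ 3))
                \<le> ennreal (C' * side_len Q0 ^ 3))"
proof -
  note M = assms(1) and eps = assms(2,3) and C = assms(4)
  have M0: "M \<ge> 0" using M by simp
  have Mp: "M > 0" using M by simp
  obtain m :: nat where m: "6 * C < 2^m" using real_arch_pow[of 2 "6 * C"] by auto
  define \<eta> where "\<eta> = (\<epsilon> * C)^2 / (M * 4^(m+1))"
  have eta: "\<eta> > 0" "\<eta> \<le> M" "sqrt (\<eta> * M) * 2^(m+1) \<le> \<epsilon> * C"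
    using constants[OF M eps C m] unfolding \<eta>_def by auto
  define \<theta> where "\<theta> = \<eta> / 2"
  have th: "\<theta> > 0" "\<theta> \<le> 8 * M" using eta M by (auto simp: \<theta>_def)
  obtain N :: nat where N: "4 * M / \<eta> < 2^N" using real_arch_pow[of 2 "4 * M / \<eta>"] by auto
  have NN: "2 * M / 2^N \<le> \<eta> / 2"
  proof -
    have "4 * M < \<eta> * 2^N" using N eta by (simp add: divide_less_eq mult.commute)
    thus ?thesis by (simp add: divide_le_eq field_simps)
  qed
  define Dd where "Dd = C^2 + 4^m"
  have Dd0: "Dd \<ge> 0" by (simp add: Dd_def)
  define cnt1 where "cnt1 = (2^(m+1) + 1) * (2 * Dd + 1)"
  have cnt0: "cnt1 \<ge> 0" using Dd0 by (simp add: cnt1_def)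
  define K1 where "K1 = 8^N * 128 * M^2 / \<theta>^4"
  have K0: "K1 \<ge> 0" by (simp add: K1_def)
  define C' where "C' = K1 * cnt1 * (8 * real N * M^2 * 2^(m+1)) * (1 + 2 * Dd)"
  show ?thesis
  proof (intro exI[of _ C'] allI impI ballI)
    fix f :: "wpt \<Rightarrow> heis" and Q0 assume bl: "bilipschitz M f" and Q0: "Q0 \<in> dyadic"
    obtain n0 k0 l0 where Q0eq: "Q0 = dyadic_rect n0 k0 l0" using Q0 by (rule dyadicE)
    define s0 where "s0 = wd n0"
    have s0: "s0 > 0" by (simp add: s0_def wd_pos)
    define y0 where "y0 = of_int k0 * s0"
    define t0 where "t0 = of_int l0 * s0^2"
    define H where "H = 2^(m+1) * s0"
    have Hpos: "H > 0" using s0 by (simp add: H_def)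
    have sideQ0: "side_len Q0 = s0" by (simp add: Q0eq s0_def)
    show "(\<Sum>\<^sub>\<infinity>Q\<in>{Q \<in> bad_set f C \<epsilon>. Q \<subseteq> Q0}. ennreal (side_len Q ^ 3)) \<le> ennreal (C' * side_len Q0 ^ 3)"
    proof (rule infsum_le_finite_sums)
      show "(\<lambda>Q. ennreal (side_len Q ^ 3)) summable_on {Q \<in> bad_set f C \<epsilon>. Q \<subseteq> Q0}"
        by (rule nonneg_summable_on_complete) simp
    next
      fix F assume F: "finite F" and FS: "F \<subseteq> {Q \<in> bad_set f C \<epsilon>. Q \<subseteq> Q0}"
      define lev where "lev Q = fst (dyadic_index Q)" for Q
      define kk where "kk Q = fst (snd (dyadic_index Q))" for Q
      define ll where "ll Q = snd (snd (dyadic_index Q))" for Q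
      have Qeq: "Q = dyadic_rect (lev Q) (kk Q) (ll Q)" if "Q \<in> F" for Q
      proof -
        have "Q \<in> dyadic" using that FS by (auto simp: bad_set_def)
        then obtain n k l where "Q = dyadic_rect n k l" by (rule dyadicE)
        thus ?thesis by (simp add: lev_def kk_def ll_def)
      qed
      define e where "e Q = nat (lev Q - n0)" for Q
      define r where "r Q = wd (lev Q)" for Q
      define cy where "cy Q = (of_int (kk Q) + 1/2) * r Q" for Q
      define ct where "ct Q = (of_int (ll Q) + 1/2) * (r Q)^2" for Q
      have Qfacts: "n0 \<le> lev Q \<and> r Q = s0 / 2^(e Q) \<and> y0 \<le> cy Q \<and> cy Q \<le> y0 + s0 \<and> t0 \<le> ct Q \<and> ct Q \<le> t0 + s0^2
          \<and> side_len Q = r Q \<and> centre Q = (cy Q, ct Q) \<and> \<epsilon> \<le> ruler_coeff f (cy Q, ct Q) (C * r Q)"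
        if Q: "Q \<in> F" for Q
      proof -
        have sub: "dyadic_rect (lev Q) (kk Q) (ll Q) \<subseteq> dyadic_rect n0 k0 l0"
          using Q FS Qeq[OF Q] Q0eq by auto
        note sr = sub_rect[OF sub]
        have side: "side_len Q = r Q" using Qeq[OF Q] by (metis r_def side_len_rect)
        have cen: "centre Q = (cy Q, ct Q)" using Qeq[OF Q] by (metis centre_rect cy_def ct_def r_def)
        have bad: "\<epsilon> \<le> ruler_coeff f (centre Q) (C * side_len Q)" using Q FS by (auto simp: bad_set_def)
        show ?thesis
          using sr side cen bad wd_split[OF sr(1)]
          by (simp add: e_def r_def cy_def ct_def y0_def t0_def s0_def algebra_simps)
      qed
      have ex: "\<exists>\<sigma> it d i t'. \<sigma> < (2::nat) \<and> \<lfloor>y0 / H\<rfloor> - 2 \<le> it \<and> it \<le> \<lfloor>y0 / H\<rfloor> + 1 \<and> d < N \<and>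
         i < 2^(e Q+1+d) \<and> \<bar>t' - ct Q\<bar> \<le> (C * r Q)^2 \<and>
         \<theta> < dlt (gf f (real \<sigma> * H / 3) t') (of_int it * H + real i * H / 2^(e Q+1+d)) (H / 2^(e Q+1+d)) \<and>
         \<bar>cy Q - real \<sigma> * H / 3 - (of_int it * H + real i * H / 2^(e Q+1+d))\<bar> \<le> 2^m * r Q"
        if Q: "Q \<in> F" for Q
        using Qfacts[OF Q]
        by (intro bad_data[OF bl M eps(1) C m eta \<theta>_def NN s0 H_def]) auto
      define Pd where "Pd Q x \<longleftrightarrow> (case x of (\<sigma>, it, d, i, t') \<Rightarrow> \<sigma> < (2::nat) \<and> \<lfloor>y0 / H\<rfloor> - 2 \<le> it \<and> it \<le> \<lfloor>y0 / H\<rfloor> + 1 \<and> d < N \<and>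
         i < 2^(e Q+1+d) \<and> \<bar>t' - ct Q\<bar> \<le> (C * r Q)^2 \<and>
         \<theta> < dlt (gf f (real \<sigma> * H / 3) t') (of_int it * H + real i * H / 2^(e Q+1+d)) (H / 2^(e Q+1+d)) \<and>
         \<bar>cy Q - real \<sigma> * H / 3 - (of_int it * H + real i * H / 2^(e Q+1+d))\<bar> \<le> 2^m * r Q)" for Q x
      have "\<forall>Q\<in>F. \<exists>x. Pd Q x"
      proof
        fix Q assume "Q \<in> F"
        then obtain \<sigma> it d i t' where "Pd Q (\<sigma>, it, d, i, t')" using ex unfolding Pd_def by blast
        thus "\<exists>x. Pd Q x" by blast
      qed
      then obtain dat where dat: "\<And>Q. Q \<in> F \<Longrightarrow> Pd Q (dat Q)" using bchoice by metis
      define \<sigma>f where "\<sigma>f Q = fst (dat Q)" for Q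
      define itf where "itf Q = fst (snd (dat Q))" for Q
      define df where "df Q = fst (snd (snd (dat Q)))" for Q
      define iif where "iif Q = fst (snd (snd (snd (dat Q))))" for Q
      define tf where "tf Q = snd (snd (snd (snd (dat Q))))" for Q
      define DQ where "DQ Q = e Q + 1 + df Q" for Q
      have D: "\<sigma>f Q < (2::nat) \<and> \<lfloor>y0 / H\<rfloor> - 2 \<le> itf Q \<and> itf Q \<le> \<lfloor>y0 / H\<rfloor> + 1 \<and> df Q < N \<and>
         iif Q < 2^(DQ Q) \<and> \<bar>tf Q - ct Q\<bar> \<le> (C * r Q)^2 \<and>
         \<theta> < dlt (gf f (real (\<sigma>f Q) * H / 3) (tf Q)) (of_int (itf Q) * H + real (iif Q) * H / 2^(DQ Q)) (H / 2^(DQ Q)) \<and>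
         \<bar>cy Q - real (\<sigma>f Q) * H / 3 - (of_int (itf Q) * H + real (iif Q) * H / 2^(DQ Q))\<bar> \<le> 2^m * r Q"
        if Q: "Q \<in> F" for Q
      proof -
        have "dat Q = (\<sigma>f Q, itf Q, df Q, iif Q, tf Q)" by (simp add: \<sigma>f_def itf_def df_def iif_def tf_def)
        thus ?thesis using dat[OF Q] unfolding Pd_def DQ_def by simp
      qed
      define hQ where "hQ Q = H / 2^(DQ Q)" for Q
      define key where "key Q = (df Q, \<sigma>f Q, itf Q, DQ Q, iif Q)" for Q
      define \<Psi> where "\<Psi> \<kappa> t = (case \<kappa> of (d::nat, \<sigma>::nat, it::int, D::nat, i::nat) \<Rightarrow>
          (dlt (gf f (real \<sigma> * H / 3) t) (of_int it * H + real i * H / 2^D) (H / 2^D))^2 * (H / 2^D))" for \<kappa> t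
      define win where "win Q = {tf Q - (\<theta> * hQ Q / (8 * M))^2 .. tf Q + (\<theta> * hQ Q / (8 * M))^2}" for Q
      define ITop where "ITop = {\<lfloor>y0 / H\<rfloor> - 2 .. \<lfloor>y0 / H\<rfloor> + 1}"
      define Dmax where "Dmax = Suc (Max (DQ ` F))"
      define Big where "Big = {..<N} \<times> ({..<(2::nat)} \<times> (ITop \<times> (SIGMA D:{..<Dmax}. {..<(2::nat)^D})))"
      define Ta where "Ta = t0 - Dd * s0^2"
      define Tb where "Tb = t0 + s0^2 + Dd * s0^2"
      define Bnd where "Bnd = 8 * real N * M^2 * H"
      have rpos: "r Q > 0" for Q by (simp add: r_def wd_pos)
      have hQpos: "hQ Q > 0" for Q using Hpos by (simp add: hQ_def)
      have hQr: "2^(df Q) * hQ Q = 2^m * r Q" if Q: "Q \<in> F" for Q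
      proof -
        have "r Q = s0 / 2^(e Q)" using Qfacts[OF Q] by simp
        thus ?thesis by (simp add: hQ_def DQ_def H_def power_add field_simps)
      qed
      have hQle: "hQ Q \<le> 2^m * r Q" if Q: "Q \<in> F" for Q
      proof -
        have "1 * hQ Q \<le> 2^(df Q) * hQ Q" using hQpos[of Q] by (intro mult_right_mono) auto
        thus ?thesis using hQr[OF Q] by simp
      qed
      have rle: "r Q \<le> 2^(df Q) * hQ Q" if Q: "Q \<in> F" for Q
      proof -
        have "1 * r Q \<le> 2^m * r Q" using rpos[of Q] by (intro mult_right_mono) auto
        thus ?thesis using hQr[OF Q] by simp
      qed
      have winb: "\<bar>t - ct Q\<bar> \<le> Dd * (r Q)^2" if Q: "Q \<in> F" and t: "t \<in> win Q" for Q t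
      proof -
        have a: "\<bar>t - tf Q\<bar> \<le> (\<theta> * hQ Q / (8 * M))^2" using t by (auto simp: win_def)
        have "\<theta> * hQ Q / (8 * M) \<le> hQ Q"
        proof -
          have "\<theta> / (8 * M) \<le> 1" using th Mp by simp
          hence "\<theta> / (8 * M) * hQ Q \<le> 1 * hQ Q" using hQpos[of Q] by (intro mult_right_mono) auto
          thus ?thesis by simp
        qed
        hence "(\<theta> * hQ Q / (8 * M))^2 \<le> (hQ Q)^2" using th Mp hQpos[of Q] by (intro power_mono) auto
        also have "(hQ Q)^2 \<le> (2^m * r Q)^2" using hQle[OF Q] hQpos[of Q] by (intro power_mono) auto
        also have "(2^m * r Q)^2 = 4^m * (r Q)^2" by (simp add: power_mult_distrib power_mult[symmetric] mult.commute[of m 2] power_mult)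
        finally have b: "\<bar>t - tf Q\<bar> \<le> 4^m * (r Q)^2" using a by linarith
        have c: "\<bar>tf Q - ct Q\<bar> \<le> C^2 * (r Q)^2" using D[OF Q] by (simp add: power_mult_distrib)
        have "\<bar>t - ct Q\<bar> \<le> \<bar>t - tf Q\<bar> + \<bar>tf Q - ct Q\<bar>" by linarith
        also have "\<dots> \<le> 4^m * (r Q)^2 + C^2 * (r Q)^2" using b c by linarith
        also have "\<dots> = Dd * (r Q)^2" by (simp add: Dd_def algebra_simps)
        finally show ?thesis .
      qed
      have winT: "win Q \<subseteq> {Ta..Tb}" if Q: "Q \<in> F" for Q
      proof
        fix t assume t: "t \<in> win Q"
        have rs: "r Q \<le> s0"
        proof -
          have "r Q = s0 / 2^(e Q)" using Qfacts[OF Q] by simp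
          also have "\<dots> \<le> s0 / 1" using s0 by (intro divide_left_mono) auto
          finally show ?thesis by simp
        qed
        have "(r Q)^2 \<le> s0^2" using rs rpos[of Q] by (intro power_mono) auto
        hence "Dd * (r Q)^2 \<le> Dd * s0^2" using Dd0 by (intro mult_left_mono) auto
        thus "t \<in> {Ta..Tb}" using winb[OF Q t] Qfacts[OF Q] unfolding Ta_def Tb_def by (auto simp: abs_le_iff)
      qed
      have finBig: "finite Big" by (simp add: Big_def ITop_def finite_SigmaI)
      have keyF: "key ` F \<subseteq> Big"
      proof
        fix \<kappa> assume "\<kappa> \<in> key ` F"
        then obtain Q where Q: "Q \<in> F" and k: "\<kappa> = key Q" by blast
        have "DQ Q \<le> Max (DQ ` F)" using F Q by (intro Max_ge) auto
        hence "DQ Q < Dmax" by (simp add: Dmax_def)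
        thus "\<kappa> \<in> Big" using D[OF Q] unfolding k key_def Big_def ITop_def by auto
      qed
      have nn: "\<Psi> \<kappa> t \<ge> 0" for \<kappa> t using Hpos by (simp add: \<Psi>_def split: prod.splits)
      have meas: "\<Psi> \<kappa> \<in> borel_measurable borel" for \<kappa>
      proof -
        obtain d \<sigma> it D i where k: "\<kappa> = (d, \<sigma>, it, D, i)" by (cases \<kappa>) auto
        have eq: "\<Psi> \<kappa> = (\<lambda>t. (dlt (gf f (real \<sigma> * H / 3) t) (of_int it * H + real i * H / 2^D) (H / 2^D))^2 * (H / 2^D))"
          by (simp add: \<Psi>_def k fun_eq_iff)
        show ?thesis unfolding eq by (rule dlt_meas[OF bl M0])
      qed
      have wmeas: "win Q \<in> sets borel" for Q by (simp add: win_def)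
      have charge': "ennreal (side_len Q ^ 3) \<le> ennreal K1 * (\<integral>\<^sup>+t. ennreal (indicator (win Q) t * \<Psi> (key Q) t) \<partial>lborel)"
        if Q: "Q \<in> F" for Q
      proof -
        have dl: "\<theta> < dlt (gf f (real (\<sigma>f Q) * H / 3) (tf Q)) (of_int (itf Q) * H + real (iif Q) * H / 2^(DQ Q)) (hQ Q)"
          using D[OF Q] by (simp add: hQ_def)
        have ch: "ennreal ((r Q)^3) \<le> ennreal K1 *
           (\<integral>\<^sup>+t. ennreal (indicator {tf Q - (\<theta> * hQ Q / (8 * M))^2 .. tf Q + (\<theta> * hQ Q / (8 * M))^2} t *
              ((dlt (gf f (real (\<sigma>f Q) * H / 3) t) (of_int (itf Q) * H + real (iif Q) * H / 2^(DQ Q)) (hQ Q))^2 * hQ Q)) \<partial>lborel)"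
          unfolding K1_def by (rule charge[OF bl M th(1) hQpos dl rpos rle[OF Q]]) (use D[OF Q] in simp)
        have ps: "\<Psi> (key Q) t = (dlt (gf f (real (\<sigma>f Q) * H / 3) t) (of_int (itf Q) * H + real (iif Q) * H / 2^(DQ Q)) (hQ Q))^2 * hQ Q" for t
          by (simp add: \<Psi>_def key_def hQ_def)
        show ?thesis using ch Qfacts[OF Q] unfolding ps win_def by simp
      qed
      have count: "(\<Sum>Q\<in>{Q\<in>F. key Q = \<kappa>}. indicator (win Q) t) \<le> cnt1 * indicator {Ta..Tb} t" for \<kappa> t
      proof (cases "t \<in> {Ta..Tb}")
        case False
        have "(\<Sum>Q\<in>{Q\<in>F. key Q = \<kappa>}. indicator (win Q) t) = (\<Sum>Q\<in>{Q\<in>F. key Q = \<kappa>}. (0::real))"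
        proof (rule sum.cong)
          fix Q assume "Q \<in> {Q\<in>F. key Q = \<kappa>}"
          hence "win Q \<subseteq> {Ta..Tb}" using winT by auto
          hence "t \<notin> win Q" using False by blast
          thus "indicator (win Q) t = (0::real)" by simp
        qed simp
        thus ?thesis using False by simp
      next
        case True
        obtain d \<sigma> it D i where k: "\<kappa> = (d, \<sigma>, it, D, i)" by (cases \<kappa>) auto
        define A' where "A' = {Q\<in>{Q\<in>F. key Q = \<kappa>}. t \<in> win Q}"
        define rr where "rr = s0 / 2^(D - 1 - d)"
        have rrpos: "rr > 0" using s0 by (simp add: rr_def)
        have A'F: "Q \<in> F" if "Q \<in> A'" for Q using that by (simp add: A'_def)
        have A'k: "df Q = d \<and> \<sigma>f Q = \<sigma> \<and> itf Q = it \<and> DQ Q = D \<and> iif Q = i" if "Q \<in> A'" for Q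
          using that by (simp add: A'_def key_def k)
        have eQ: "e Q = D - 1 - d" if "Q \<in> A'" for Q
        proof -
          have "df Q = d" "e Q + 1 + df Q = D" using A'k[OF that] by (simp_all add: DQ_def)
          thus ?thesis by arith
        qed
        have rQ: "r Q = rr" if "Q \<in> A'" for Q using Qfacts[OF A'F[OF that]] eQ[OF that] by (simp add: rr_def)
        have levQ: "lev Q = n0 + int (D - 1 - d)" if "Q \<in> A'" for Q
        proof -
          have "n0 \<le> lev Q" "nat (lev Q - n0) = D - 1 - d"
            using Qfacts[OF A'F[OF that]] eQ[OF that] by (simp_all add: e_def)
          thus ?thesis by linarith
        qed
        define xJ where "xJ = of_int it * H + real i * H / 2^D"
        define Ak where "Ak = (xJ + real \<sigma> * H / 3) / rr - 1/2 - 2^m"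
        define Al where "Al = t / rr^2 - 1/2 - Dd"
        define KS where "KS = {k::int. Ak \<le> of_int k \<and> of_int k \<le> Ak + 2^(m+1)}"
        define LS where "LS = {l::int. Al \<le> of_int l \<and> of_int l \<le> Al + 2 * Dd}"
        have KSf: "finite KS" "real (card KS) \<le> 2^(m+1) + 1"
          unfolding KS_def using card_int_interval[of "2^(m+1)" Ak] by auto
        have LSf: "finite LS" "real (card LS) \<le> 2 * Dd + 1"
          unfolding LS_def using card_int_interval[of "2 * Dd" Al] Dd0 by auto
        define \<phi> where "\<phi> Q = (kk Q, ll Q)" for Q
        have inj: "inj_on \<phi> A'"
        proof (rule inj_onI)
          fix Q Q' assume Q: "Q \<in> A'" and Q': "Q' \<in> A'" and eq: "\<phi> Q = \<phi> Q'"
          have "Q = dyadic_rect (lev Q) (kk Q) (ll Q)" by (rule Qeq[OF A'F[OF Q]])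
          also have "\<dots> = dyadic_rect (lev Q') (kk Q') (ll Q')" using eq levQ[OF Q] levQ[OF Q'] by (simp add: \<phi>_def)
          also have "\<dots> = Q'" by (rule Qeq[OF A'F[OF Q'], symmetric])
          finally show "Q = Q'" .
        qed
        have img: "\<phi> ` A' \<subseteq> KS \<times> LS"
        proof
          fix p assume "p \<in> \<phi> ` A'"
          then obtain Q where Q: "Q \<in> A'" and p: "p = \<phi> Q" by blast
          have DQ': "\<bar>cy Q - real (\<sigma>f Q) * H / 3 - (of_int (itf Q) * H + real (iif Q) * H / 2^(DQ Q))\<bar> \<le> 2^m * r Q"
            using D[OF A'F[OF Q]] by simp
          have "\<bar>(of_int (kk Q) + 1/2) * rr - (xJ + real \<sigma> * H / 3)\<bar> \<le> 2^m * rr"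
            using DQ' A'k[OF Q] rQ[OF Q] by (simp add: cy_def xJ_def algebra_simps)
          hence "Ak \<le> of_int (kk Q) \<and> of_int (kk Q) \<le> Ak + 2 * 2^m"
            using grid_range[OF rrpos] unfolding Ak_def by blast
          hence k1: "kk Q \<in> KS" by (simp add: KS_def)
          have tw: "t \<in> win Q" using Q by (simp add: A'_def)
          have "\<bar>(of_int (ll Q) + 1/2) * rr^2 - t\<bar> \<le> Dd * rr^2"
            using winb[OF A'F[OF Q] tw] rQ[OF Q] by (simp add: ct_def abs_minus_commute)
          hence "Al \<le> of_int (ll Q) \<and> of_int (ll Q) \<le> Al + 2 * Dd"
            using grid_range[of "rr^2"] rrpos unfolding Al_def by simp
          hence l1: "ll Q \<in> LS" by (simp add: LS_def)
          show "p \<in> KS \<times> LS" using k1 l1 p by (simp add: \<phi>_def)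
        qed
        have "card A' \<le> card (KS \<times> LS)"
          by (rule card_inj_on_le[OF inj img]) (simp add: KSf LSf)
        hence "card A' \<le> card KS * card LS" by (simp add: card_cartesian_product)
        hence "real (card A') \<le> real (card KS * card LS)" by (simp only: of_nat_le_iff)
        hence "real (card A') \<le> real (card KS) * real (card LS)" by simp
        also have "\<dots> \<le> (2^(m+1) + 1) * (2 * Dd + 1)"
          using KSf LSf by (intro mult_mono) auto
        finally have cA: "real (card A') \<le> cnt1" by (simp add: cnt1_def)
        have "(\<Sum>Q\<in>{Q\<in>F. key Q = \<kappa>}. indicator (win Q) t) = real (card A')"
          unfolding A'_def by (rule sum_indicator_card) (simp add: F)
        thus ?thesis using cA True by simp
      qed
      have bnd: "(\<Sum>\<kappa>\<in>Big. \<Psi> \<kappa> t) \<le> Bnd" for t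
      proof -
        have inner: "(\<Sum>Di\<in>(SIGMA D:{..<Dmax}. {..<(2::nat)^D}). \<Psi> (d, \<sigma>, it, Di) t) \<le> M^2 * H" for d \<sigma> it
        proof -
          have "(\<Sum>Di\<in>(SIGMA D:{..<Dmax}. {..<(2::nat)^D}). \<Psi> (d, \<sigma>, it, Di) t) =
              (\<Sum>D<Dmax. \<Sum>i<2^D. \<Psi> (d, \<sigma>, it, D, i) t)"
            by (rule sum_sigma_split) auto
          also have "\<dots> = (\<Sum>D<Dmax. \<Sum>i<2^D. (dlt (gf f (real \<sigma> * H / 3) t) (of_int it * H + real i * H / 2^D) (H / 2^D))^2 * (H / 2^D))"
            by (simp add: \<Psi>_def)
          also have "\<dots> \<le> M^2 * H" by (rule pythagoras[OF gf_lip[OF bl] Hpos])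
          finally show ?thesis .
        qed
        have l3: "(\<Sum>x\<in>ITop \<times> (SIGMA D:{..<Dmax}. {..<(2::nat)^D}). \<Psi> (d, \<sigma>, x) t) \<le> 4 * (M^2 * H)" for d \<sigma>
        proof -
          have "(\<Sum>x\<in>ITop \<times> (SIGMA D:{..<Dmax}. {..<(2::nat)^D}). \<Psi> (d, \<sigma>, x) t) =
              (\<Sum>it\<in>ITop. \<Sum>Di\<in>(SIGMA D:{..<Dmax}. {..<(2::nat)^D}). \<Psi> (d, \<sigma>, it, Di) t)"
            by (rule sum_prod_split) (auto simp: ITop_def finite_SigmaI)
          also have "\<dots> \<le> real (card ITop) * (M^2 * H)" by (rule sum_bounded_above) (rule inner)
          also have "card ITop = 4" by (simp add: ITop_def)
          finally show ?thesis by simp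
        qed
        have l2: "(\<Sum>x\<in>{..<(2::nat)} \<times> (ITop \<times> (SIGMA D:{..<Dmax}. {..<(2::nat)^D})). \<Psi> (d, x) t) \<le> 2 * (4 * (M^2 * H))" for d
        proof -
          have "(\<Sum>x\<in>{..<(2::nat)} \<times> (ITop \<times> (SIGMA D:{..<Dmax}. {..<(2::nat)^D})). \<Psi> (d, x) t) =
              (\<Sum>\<sigma><2. \<Sum>x\<in>ITop \<times> (SIGMA D:{..<Dmax}. {..<(2::nat)^D}). \<Psi> (d, \<sigma>, x) t)"
            by (rule sum_prod_split) (auto simp: ITop_def finite_SigmaI)
          also have "\<dots> \<le> real (card {..<(2::nat)}) * (4 * (M^2 * H))" by (rule sum_bounded_above) (rule l3)
          finally show ?thesis by simp
        qed
        have "(\<Sum>\<kappa>\<in>Big. \<Psi> \<kappa> t) = (\<Sum>d<N. \<Sum>x\<in>{..<(2::nat)} \<times> (ITop \<times> (SIGMA D:{..<Dmax}. {..<(2::nat)^D})). \<Psi> (d, x) t)"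
          unfolding Big_def by (rule sum_prod_split) (auto simp: ITop_def finite_SigmaI)
        also have "\<dots> \<le> real (card {..<N}) * (2 * (4 * (M^2 * H)))" by (rule sum_bounded_above) (rule l2)
        also have "\<dots> = Bnd" by (simp add: Bnd_def)
        finally show ?thesis .
      qed
      have TaTb: "Ta \<le> Tb" using Dd0 s0 by (simp add: Ta_def Tb_def)
      have main: "(\<Sum>Q\<in>F. ennreal (side_len Q ^ 3)) \<le> ennreal (K1 * cnt1 * Bnd * (Tb - Ta))"
        by (rule abstract_sum[OF F finBig keyF nn meas wmeas charge' count bnd cnt0 K0 TaTb])
      have "K1 * cnt1 * Bnd * (Tb - Ta) = C' * side_len Q0 ^ 3"
        unfolding sideQ0 C'_def Bnd_def Ta_def Tb_def H_def by (simp add: algebra_simps power2_eq_square power3_eq_cube)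
      thus "(\<Sum>Q\<in>F. ennreal (side_len Q ^ 3)) \<le> ennreal (C' * side_len Q0 ^ 3)" using main by simp
    qed
  qed
qed


end
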